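(* Let $A \in \mathbb{R}^{n\times n}$ and let $Q, D \in \mathbb{R}^{n\times n}$ be symmetric. Assume that $(A,D)$ is stabilizable and $(Q,A)$ is detectable, and let $P$ be the unique stabilizing solution of $A^T X + XA + Q - XDX = 0$. Let $$H = \begin{bmatrix} A & -D \\ -Q & -A^T\end{bmatrix},\qquad J=\begin{bmatrix}\mathbf{0}_n & I_n\\ -I_n & \mathbf{0}_n\end{bmatrix}.$$ Let $(\mu_j, v_j)$ and $(-\mu_j, v_{-j})$ be two right eigenpairs of $H$, where $\mu_j$ (and hence $-\mu_j$) is a (non-real) complex eigenvalue of $H$ with partial multiplicity $1$. Let $\theta_j := (v_j^T J v_{-j})^{-1}$ and $p_j = \theta_j J v_{-j}$, $q_j = \theta_j J v_j$. Then for any $\Delta\mu_j \in \mathbb{R}$ there exist $\tilde A\in\mathbb{R}^{n\times n}$ and symmetric $\tilde Q,\tilde D\in\mathbb{R}^{n\times n}$ such that $$H + 2\Delta\mu_j\,\mathrm{Re}\!\left(v_j p_j^T + v_{-j} q_j^T\right) = \begin{bmatrix} \tilde A & -\tilde D \\ -\tilde Q & -\tilde A^T\end{bmatrix}.$$ Moreover, if $\frac{\Delta\mu_j}{\mathrm{Re}(\mu_j)} > -1$, then $P$ is the unique stabilizing solution of $\tilde A^T X + X\tilde A + \tilde Q - X\tilde D X = 0$.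
   Context: A solution $X$ of $A^TX+XA+Q-XDX=0$ is stabilizing if $A-DX$ is Hurwitz; such a solution, if it exists, is unique. The partial multiplicity of an eigenvalue refers to the size of a Jordan block for that eigenvalue in the Jordan normal form; partial multiplicity $1$ means the Jordan blocks of that eigenvalue have size $1$. $\mathrm{Re}$ denotes the entrywise real part. The definition of $\theta_j$ presupposes $v_j^TJv_{-j}\neq 0$. *)

theory Defs
  imports Complex_Main "Jordan_Normal_Form.Jordan_Normal_Form" "Jordan_Normal_Form.Char_Poly"
begin

definition cmat :: "real mat \<Rightarrow> complex mat" where
  "cmat M = map_mat complex_of_real M"

definition hurwitz :: "real mat \<Rightarrow> bool" where
  "hurwitz M \<longleftrightarrow> (\<forall>ev. eigenvalue (cmat M) ev \<longrightarrow> Re ev < 0)"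

definition stabilizable :: "nat \<Rightarrow> real mat \<Rightarrow> real mat \<Rightarrow> bool" where
  "stabilizable n A B \<longleftrightarrow> (\<exists>K \<in> carrier_mat (dim_col B) n. hurwitz (A + B * K))"

definition detectable :: "nat \<Rightarrow> real mat \<Rightarrow> real mat \<Rightarrow> bool" where
  "detectable n C A \<longleftrightarrow> stabilizable n (transpose_mat A) (transpose_mat C)"

definition are_solution :: "nat \<Rightarrow> real mat \<Rightarrow> real mat \<Rightarrow> real mat \<Rightarrow> real mat \<Rightarrow> bool" where
  "are_solution n A Q D X \<longleftrightarrow> X \<in> carrier_mat n n \<and>
     transpose_mat A * X + X * A + Q - X * D * X = 0\<^sub>m n n"

definition stabilizing_solution :: "nat \<Rightarrow> real mat \<Rightarrow> real mat \<Rightarrow> real mat \<Rightarrow> real mat \<Rightarrow> bool" where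
  "stabilizing_solution n A Q D X \<longleftrightarrow> are_solution n A Q D X \<and> hurwitz (A - D * X)"

definition hamiltonian :: "real mat \<Rightarrow> real mat \<Rightarrow> real mat \<Rightarrow> real mat" where
  "hamiltonian A D Q = four_block_mat A (- D) (- Q) (- transpose_mat A)"

definition Jmat :: "nat \<Rightarrow> complex mat" where
  "Jmat n = four_block_mat (0\<^sub>m n n) (1\<^sub>m n) (- 1\<^sub>m n) (0\<^sub>m n n)"

definition outer_prod :: "'a::times vec \<Rightarrow> 'a vec \<Rightarrow> 'a mat" where
  "outer_prod v w = mat (dim_vec v) (dim_vec w) (\<lambda>(i,k). v $ i * w $ k)"

definition partial_multiplicity_one :: "complex mat \<Rightarrow> complex \<Rightarrow> bool" where
  "partial_multiplicity_one M \<mu> \<longleftrightarrow> eigenvalue M \<mu> \<and>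
     (\<forall>n_as. jordan_nf M n_as \<longrightarrow> (\<forall>(k, a) \<in> set n_as. a = \<mu> \<longrightarrow> k = 1))"

end

theory Submission
  imports Defs "Jordan_Normal_Form.Schur_Decomposition"
begin

lemma mat_eq_zero_by_vec:
  fixes K :: "'a::comm_ring_1 mat"
  assumes K: "K \<in> carrier_mat nr nc" and h: "\<And>w. w \<in> carrier_vec nc \<Longrightarrow> K *\<^sub>v w = 0\<^sub>v nr"
  shows "K = 0\<^sub>m nr nc"
proof (rule eq_matI)
  fix i j assume i: "i < dim_row (0\<^sub>m nr nc)" and j: "j < dim_col (0\<^sub>m nr nc)"
  have "(K *\<^sub>v unit_vec nc j) $ i = 0" using h[of "unit_vec nc j"] i by simp
  moreover have "(K *\<^sub>v unit_vec nc j) $ i = K $$ (i,j)"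
  proof -
    have "(K *\<^sub>v unit_vec nc j) $ i = (\<Sum>x = 0..<nc. K $$ (i,x) * (if x = j then 1 else 0))"
      using K i j by (auto simp: scalar_prod_def unit_vec_def intro!: sum.cong)
    also have "\<dots> = (\<Sum>x = 0..<nc. if x = j then K $$ (i,x) else 0)"
      by (rule sum.cong) auto
    also have "\<dots> = K $$ (i,j)" using j i by (simp add: sum.delta)
    finally show ?thesis .
  qed
  ultimately show "K $$ (i,j) = 0\<^sub>m nr nc $$ (i,j)" using i j by simp
qed (use K in auto)

lemma upper_triangular_diag_eigenvalue:
  fixes B :: "'a::field mat"
  assumes B: "B \<in> carrier_mat k k" and ut: "upper_triangular B" and j: "j < k"
  shows "eigenvalue B (B $$ (j,j))"
proof -
  have gen: "x \<in> set xs \<Longrightarrow> poly (\<Prod>a\<leftarrow>xs. [:- a, 1:]) x = 0" for x :: 'a and xs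
    by (induction xs) auto
  have "B $$ (j,j) \<in> set (diag_mat B)" using B j unfolding diag_mat_def by auto
  hence "poly (char_poly B) (B $$ (j,j)) = 0"
    unfolding char_poly_upper_triangular[OF B ut] by (rule gen)
  thus ?thesis using eigenvalue_root_char_poly[OF B] by simp
qed

lemma sylvester_zero:
  fixes X :: "complex mat"
  assumes X: "X \<in> carrier_mat m m" and Y: "Y \<in> carrier_mat k k" and L: "L \<in> carrier_mat m k"
    and eq: "X * L = L * Y"
    and disj: "\<And>l. eigenvalue X l \<Longrightarrow> \<not> eigenvalue Y l"
  shows "L = 0\<^sub>m m k"
proof -
  obtain as where cp: "char_poly Y = (\<Prod>a\<leftarrow>as. [:- a, 1:])" using char_poly_factorized[OF Y] by blast
  obtain B where B: "B \<in> carrier_mat k k" and ut: "upper_triangular B" and sim: "similar_mat Y B"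
    using schur_decomposition_exists[OF Y cp] by blast
  from similar_matD[OF sim] obtain n' P Q where carr: "{Y, B, P, Q} \<subseteq> carrier_mat n' n'"
    and PQ: "P * Q = 1\<^sub>m n'" and QP: "Q * P = 1\<^sub>m n'" and YB: "Y = P * B * Q" by blast
  have n': "n' = k" using carr Y by auto
  have P: "P \<in> carrier_mat k k" and Q: "Q \<in> carrier_mat k k" using carr n' by auto
  have cpYB: "char_poly Y = char_poly B" by (rule char_poly_similar[OF sim])
  have evB: "eigenvalue Y (B $$ (j,j))" if "j < k" for j
    using upper_triangular_diag_eigenvalue[OF B ut that] eigenvalue_root_char_poly[OF B]
      eigenvalue_root_char_poly[OF Y] cpYB by simp
  define L' where "L' = L * P"
  have L': "L' \<in> carrier_mat m k" using L P unfolding L'_def by auto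
  have XL': "X * L' = L' * B"
  proof -
    have "X * L' = (X * L) * P" unfolding L'_def using X L P by simp
    also have "\<dots> = L * (P * B * Q) * P" using eq YB by simp
    also have "\<dots> = L * P * B * (Q * P)"
    proof -
      have PB: "P * B \<in> carrier_mat k k" using P B by simp
      have "P * B * Q * P = P * B * (Q * P)" using assoc_mult_mat[OF PB Q P] .
      hence "L * (P * B * Q) * P = L * (P * B * (Q * P))"
        using assoc_mult_mat[OF L mult_carrier_mat[OF PB Q] P] assoc_mult_mat[OF L PB Q] by simp
      also have "\<dots> = L * (P * B) * (Q * P)" using assoc_mult_mat[OF L PB mult_carrier_mat[OF Q P]] by simp
      also have "\<dots> = L * P * B * (Q * P)" using assoc_mult_mat[OF L P B] by simp
      finally show ?thesis .
    qed
    also have "\<dots> = L' * B" unfolding QP n' L'_def using L P B by simp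
    finally show ?thesis .
  qed
  have colz: "\<forall>i<m. L' $$ (i,j) = 0" if "j < k" for j
    using that
  proof (induction j rule: less_induct)
    case (less j)
    define c where "c = col L' j"
    have c: "c \<in> carrier_vec m" unfolding c_def using L' by auto
    have "X *\<^sub>v c = B $$ (j,j) \<cdot>\<^sub>v c"
    proof (rule eq_vecI)
      fix i assume i: "i < dim_vec (B $$ (j,j) \<cdot>\<^sub>v c)"
      hence im: "i < m" using c by auto
      have "(X *\<^sub>v c) $ i = (X * L') $$ (i,j)" unfolding c_def using X L' im less by simp
      also have "\<dots> = (L' * B) $$ (i,j)" by (simp add: XL')
      also have "\<dots> = (\<Sum>l<k. L' $$ (i,l) * B $$ (l,j))"
        using L' B im less by (simp add: scalar_prod_def lessThan_atLeast0)
      also have "\<dots> = (\<Sum>l<k. if l = j then L' $$ (i,j) * B $$ (j,j) else 0)"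
      proof (rule sum.cong[OF refl])
        fix l assume l: "l \<in> {..<k}"
        show "L' $$ (i,l) * B $$ (l,j) = (if l = j then L' $$ (i,j) * B $$ (j,j) else 0)"
        proof (cases "l < j")
          case True thus ?thesis using less.IH[of l] less im by auto
        next
          case False
          show ?thesis
          proof (cases "l = j")
            case False
            with \<open>\<not> l < j\<close> have "j < l" by auto
            thus ?thesis using ut B l unfolding upper_triangular_def by auto
          qed simp
        qed
      qed
      also have "\<dots> = L' $$ (i,j) * B $$ (j,j)" using less by simp
      also have "\<dots> = (B $$ (j,j) \<cdot>\<^sub>v c) $ i" unfolding c_def using L' im less by simp
      finally show "(X *\<^sub>v c) $ i = (B $$ (j,j) \<cdot>\<^sub>v c) $ i" .
    qed (use X c in auto)
    hence "c = 0\<^sub>v m"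
      using disj[of "B $$ (j,j)"] evB[OF less.prems] c X
      unfolding eigenvalue_def eigenvector_def by auto
    thus ?case unfolding c_def using L' less.prems
      by (auto simp: vec_eq_iff)
  qed
  have L'0: "L' = 0\<^sub>m m k" by (rule eq_matI, insert colz L', auto)
  have "L = L * (P * Q)" using PQ L n' by simp
  also have "\<dots> = L' * Q" unfolding L'_def using L P Q by simp
  finally show ?thesis using L'0 Q by simp
qed

lemma are_diff:
  fixes A Q D X1 X2 :: "real mat"
  assumes A: "A \<in> carrier_mat n n" and Q: "Q \<in> carrier_mat n n" and D: "D \<in> carrier_mat n n"
    and X1: "X1 \<in> carrier_mat n n" and X2: "X2 \<in> carrier_mat n n"
    and R1: "transpose_mat A * X1 + X1 * A + Q - X1 * D * X1 = 0\<^sub>m n n"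
    and R2: "transpose_mat A * X2 + X2 * A + Q - X2 * D * X2 = 0\<^sub>m n n"
  shows "(transpose_mat A - X1 * D) * (X1 - X2) + (X1 - X2) * (A - D * X2) = 0\<^sub>m n n"
proof (rule mat_eq_zero_by_vec)
  have At: "transpose_mat A \<in> carrier_mat n n" using A by simp
  show "(transpose_mat A - X1 * D) * (X1 - X2) + (X1 - X2) * (A - D * X2) \<in> carrier_mat n n"
    using A D X1 X2 by auto
  fix w :: "real vec" assume w: "w \<in> carrier_vec n"
  show "((transpose_mat A - X1 * D) * (X1 - X2) + (X1 - X2) * (A - D * X2)) *\<^sub>v w = 0\<^sub>v n"
  proof (rule eq_vecI)
    fix i assume "i < dim_vec (0\<^sub>v n :: real vec)"
    hence i: "i < n" by simp
    have r1: "((transpose_mat A * X1 + X1 * A + Q - X1 * D * X1) *\<^sub>v w) $ i = 0" using R1 i w by simp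
    have r2: "((transpose_mat A * X2 + X2 * A + Q - X2 * D * X2) *\<^sub>v w) $ i = 0" using R2 i w by simp
    note c = A At Q D X1 X2 w
    have cm: "M \<in> carrier_mat n n \<Longrightarrow> N \<in> carrier_mat n n \<Longrightarrow> M * N \<in> carrier_mat n n"
      "M \<in> carrier_mat n n \<Longrightarrow> N \<in> carrier_mat n n \<Longrightarrow> M + N \<in> carrier_mat n n"
      "M \<in> carrier_mat n n \<Longrightarrow> N \<in> carrier_mat n n \<Longrightarrow> M - N \<in> carrier_mat n n"
      "M \<in> carrier_mat n n \<Longrightarrow> v \<in> carrier_vec n \<Longrightarrow> M *\<^sub>v v \<in> carrier_vec n"
      for M N :: "real mat" and v by auto
    from r1 r2 show "(((transpose_mat A - X1 * D) * (X1 - X2) + (X1 - X2) * (A - D * X2)) *\<^sub>v w) $ i = 0\<^sub>v n $ i"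
      using c i
      by (simp add: cm add_mult_distrib_mat_vec[of _ n n] minus_mult_distrib_mat_vec[of _ n n]
          mult_minus_distrib_mat_vec[of _ n n] mult_add_distrib_mat_vec[of _ n n]
          assoc_mult_mat_vec[of _ n n _ n] del: index_mult_mat_vec)
  qed (use A D X1 X2 in auto)
qed


lemma minus_zero_eq:
  fixes K :: "'a::ab_group_add mat"
  assumes "K \<in> carrier_mat nr nc" "L \<in> carrier_mat nr nc" "K - L = 0\<^sub>m nr nc"
  shows "K = L"
proof (rule eq_matI)
  fix i j assume ij: "i < dim_row L" "j < dim_col L"
  have "(K - L) $$ (i,j) = 0" unfolding assms(3) using assms ij by simp
  moreover have "(K - L) $$ (i,j) = K $$ (i,j) - L $$ (i,j)" using assms(1,2) ij by simp
  ultimately show "K $$ (i,j) = L $$ (i,j)" by simp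
qed (use assms in auto)

lemma eq_by_vec_index:
  fixes M1 :: "'a::comm_ring_1 mat"
  assumes M1: "M1 \<in> carrier_mat nr nc" and M2: "M2 \<in> carrier_mat nr nc"
    and h: "\<And>w i. w \<in> carrier_vec nc \<Longrightarrow> i < nr \<Longrightarrow> (M1 *\<^sub>v w) $ i = (M2 *\<^sub>v w) $ i"
  shows "M1 = M2"
proof -
  have "M1 - M2 = 0\<^sub>m nr nc"
  proof (rule mat_eq_zero_by_vec)
    show "M1 - M2 \<in> carrier_mat nr nc" using M2 by (rule minus_carrier_mat)
    fix w :: "'a vec" assume w: "w \<in> carrier_vec nc"
    show "(M1 - M2) *\<^sub>v w = 0\<^sub>v nr"
      by (rule eq_vecI, insert M1 M2 w h[OF w], auto simp: minus_mult_distrib_mat_vec[OF M1 M2 w] simp del: index_mult_mat_vec)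
  qed
  thus ?thesis using M1 M2 by (rule minus_zero_eq[rotated 2])
qed

lemma cmat_dims[simp]: "dim_row (cmat M) = dim_row M" "dim_col (cmat M) = dim_col M"
  unfolding cmat_def by auto

lemma cmat_carrier[simp]: "cmat M \<in> carrier_mat nr nc \<longleftrightarrow> M \<in> carrier_mat nr nc"
  unfolding carrier_mat_def by simp

lemma cmat_index[simp]: "i < dim_row M \<Longrightarrow> j < dim_col M \<Longrightarrow> cmat M $$ (i,j) = of_real (M $$ (i,j))"
  unfolding cmat_def by simp

lemma cmat_mult: "A \<in> carrier_mat nr n \<Longrightarrow> B \<in> carrier_mat n nc \<Longrightarrow> cmat (A * B) = cmat A * cmat B"
  unfolding cmat_def by (rule of_real_hom.mat_hom_mult)

lemma cmat_add: "A \<in> carrier_mat nr nc \<Longrightarrow> B \<in> carrier_mat nr nc \<Longrightarrow> cmat (A + B) = cmat A + cmat B"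
  unfolding cmat_def by (intro eq_matI) auto

lemma cmat_minus: "A \<in> carrier_mat nr nc \<Longrightarrow> B \<in> carrier_mat nr nc \<Longrightarrow> cmat (A - B) = cmat A - cmat B"
  unfolding cmat_def by (intro eq_matI) auto

lemma cmat_uminus: "cmat (- A) = - cmat A"
  unfolding cmat_def by (intro eq_matI) auto

lemma cmat_transpose: "cmat (transpose_mat A) = transpose_mat (cmat A)"
  unfolding cmat_def by (intro eq_matI) auto

lemma cmat_zero: "cmat (0\<^sub>m nr nc) = 0\<^sub>m nr nc"
  unfolding cmat_def by (intro eq_matI) auto

lemma cmat_smult: "cmat (c \<cdot>\<^sub>m A) = complex_of_real c \<cdot>\<^sub>m cmat A"
  unfolding cmat_def by (intro eq_matI) auto

lemma cmat_inj: "cmat A = cmat B \<Longrightarrow> A = B"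
  unfolding cmat_def by (rule of_real_hom.mat_hom_inj)

lemma eigenvalue_transpose:
  fixes M :: "'a::field mat"
  assumes M: "M \<in> carrier_mat n n"
  shows "eigenvalue (transpose_mat M) l \<longleftrightarrow> eigenvalue M l"
  using eigenvalue_root_char_poly[OF M] eigenvalue_root_char_poly[of "transpose_mat M" n] M by simp

lemma eigenvalue_uminus:
  fixes M :: "'a::field mat"
  assumes M: "M \<in> carrier_mat n n" and ev: "eigenvalue (- M) l"
  shows "eigenvalue M (- l)"
proof -
  from ev obtain v where v: "v \<in> carrier_vec n" "v \<noteq> 0\<^sub>v n" "(- M) *\<^sub>v v = l \<cdot>\<^sub>v v"
    unfolding eigenvalue_def eigenvector_def using M by auto
  have "M *\<^sub>v v = (- l) \<cdot>\<^sub>v v"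
  proof (rule eq_vecI)
    fix i assume i: "i < dim_vec ((- l) \<cdot>\<^sub>v v)"
    have "(- (M *\<^sub>v v)) $ i = (l \<cdot>\<^sub>v v) $ i" using arg_cong[OF v(3), of "\<lambda>x. x $ i"] v(1) M i by simp
    hence "- ((M *\<^sub>v v) $ i) = l * v $ i" using i v(1) M by simp
    thus "(M *\<^sub>v v) $ i = ((- l) \<cdot>\<^sub>v v) $ i" using i v(1) M by (simp add: minus_equation_iff)
  qed (use M v in auto)
  thus ?thesis unfolding eigenvalue_def eigenvector_def using v M by auto
qed

lemma hurwitz_eig: "hurwitz M \<Longrightarrow> eigenvalue (cmat M) l \<Longrightarrow> Re l < 0"
  unfolding hurwitz_def by auto

lemma hurwitz_transpose_eig:
  assumes M: "M \<in> carrier_mat n n" and h: "hurwitz M" and ev: "eigenvalue (transpose_mat (cmat M)) l"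
  shows "Re l < 0"
  using hurwitz_eig[OF h] ev eigenvalue_transpose[of "cmat M" n] M by simp

lemma sylvester_real:
  fixes F G K :: "real mat"
  assumes F: "F \<in> carrier_mat n n" and G: "G \<in> carrier_mat n n" and K: "K \<in> carrier_mat n n"
    and hF: "hurwitz F" and hG: "hurwitz G"
    and eq: "transpose_mat F * K + K * G = 0\<^sub>m n n"
  shows "K = 0\<^sub>m n n"
proof -
  let ?X = "transpose_mat (cmat F)" and ?Y = "- cmat G" and ?L = "cmat K"
  have X: "?X \<in> carrier_mat n n" and Y: "?Y \<in> carrier_mat n n" and L: "?L \<in> carrier_mat n n"
    using F G K by auto
  have ceq: "cmat (transpose_mat F * K + K * G) = 0\<^sub>m n n" using eq by (simp add: cmat_zero)
  hence ceq2: "?X * ?L + ?L * cmat G = 0\<^sub>m n n"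
    using F G K by (simp add: cmat_add[of _ n n] cmat_mult[of _ n n] cmat_transpose)
  have XL: "?X * ?L = ?L * ?Y"
  proof (rule eq_by_vec_index)
    show "?X * ?L \<in> carrier_mat n n" "?L * ?Y \<in> carrier_mat n n" using X L Y by auto
    fix w :: "complex vec" and i assume w: "w \<in> carrier_vec n" and i: "i < n"
    have "((?X * ?L + ?L * cmat G) *\<^sub>v w) $ i = 0" using ceq2 i w by simp
    thus "((?X * ?L) *\<^sub>v w) $ i = ((?L * ?Y) *\<^sub>v w) $ i"
      using X L G w i
      by (simp add: add_mult_distrib_mat_vec[of _ n n] assoc_mult_mat_vec[of _ n n _ n] del: index_mult_mat_vec)
        (metis add.commute neg_eq_iff_add_eq_0)
  qed
  have disj: "\<not> eigenvalue ?Y l" if "eigenvalue ?X l" for l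
  proof
    assume "eigenvalue ?Y l"
    hence "eigenvalue (cmat G) (- l)" using eigenvalue_uminus[of "cmat G" n] G by simp
    hence "Re (- l) < 0" using hurwitz_eig[OF hG] by blast
    moreover have "Re l < 0" using hurwitz_transpose_eig[OF F hF that] .
    ultimately show False by simp
  qed
  have "?L = 0\<^sub>m n n" by (rule sylvester_zero[OF X Y L XL disj])
  hence "cmat K = cmat (0\<^sub>m n n)" by (simp add: cmat_zero)
  thus ?thesis by (rule cmat_inj)
qed

lemma are_transpose:
  fixes A Q D X :: "real mat"
  assumes A: "A \<in> carrier_mat n n" and Q: "Q \<in> carrier_mat n n" and D: "D \<in> carrier_mat n n"
    and Qs: "transpose_mat Q = Q" and Ds: "transpose_mat D = D"
    and sol: "are_solution n A Q D X"
  shows "are_solution n A Q D (transpose_mat X)"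
proof -
  have X: "X \<in> carrier_mat n n" and R: "transpose_mat A * X + X * A + Q - X * D * X = 0\<^sub>m n n"
    using sol unfolding are_solution_def by auto
  have At: "transpose_mat A \<in> carrier_mat n n" and Xt: "transpose_mat X \<in> carrier_mat n n" using A X by auto
  have T1: "transpose_mat (transpose_mat A * X) = transpose_mat X * A"
    using transpose_mult[OF At X] by simp
  have T2: "transpose_mat (X * A) = transpose_mat A * transpose_mat X"
    using transpose_mult[OF X A] by simp
  have T3: "transpose_mat (X * D * X) = transpose_mat X * D * transpose_mat X"
    using transpose_mult[OF mult_carrier_mat[OF X D] X] transpose_mult[OF X D] Ds assoc_mult_mat[OF Xt D Xt] by simp
  have c1: "transpose_mat A * X \<in> carrier_mat n n" "X * A \<in> carrier_mat n n" "X * D * X \<in> carrier_mat n n"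
    "transpose_mat A * X + X * A \<in> carrier_mat n n" "transpose_mat A * X + X * A + Q \<in> carrier_mat n n"
    using A X D Q by auto
  have "transpose_mat (transpose_mat A * X + X * A + Q - X * D * X)
     = transpose_mat X * A + transpose_mat A * transpose_mat X + Q - transpose_mat X * D * transpose_mat X"
    by (simp add: transpose_minus[OF c1(5) c1(3)] transpose_add[OF c1(4) Q] transpose_add[OF c1(1) c1(2)] T1 T2 T3 Qs)
  also have "\<dots> = transpose_mat A * transpose_mat X + transpose_mat X * A + Q - transpose_mat X * D * transpose_mat X"
  proof -
    have "transpose_mat X * A + transpose_mat A * transpose_mat X = transpose_mat A * transpose_mat X + transpose_mat X * A"
      by (rule comm_add_mat[of _ n n]) (use A X in auto)
    thus ?thesis by simp
  qed
  finally have "transpose_mat A * transpose_mat X + transpose_mat X * A + Q - transpose_mat X * D * transpose_mat X = 0\<^sub>m n n"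
    using R by simp
  thus ?thesis using Xt unfolding are_solution_def by simp
qed

lemma stabilizing_symmetric:
  fixes A Q D X :: "real mat"
  assumes A: "A \<in> carrier_mat n n" and Q: "Q \<in> carrier_mat n n" and D: "D \<in> carrier_mat n n"
    and Qs: "transpose_mat Q = Q" and Ds: "transpose_mat D = D"
    and st: "stabilizing_solution n A Q D X"
  shows "transpose_mat X = X"
proof -
  have sol: "are_solution n A Q D X" and h: "hurwitz (A - D * X)" using st unfolding stabilizing_solution_def by auto
  have X: "X \<in> carrier_mat n n" using sol unfolding are_solution_def by auto
  have solT: "are_solution n A Q D (transpose_mat X)" by (rule are_transpose[OF A Q D Qs Ds sol])
  have e: "(transpose_mat A - transpose_mat X * D) * (transpose_mat X - X) + (transpose_mat X - X) * (A - D * X) = 0\<^sub>m n n"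
  proof (rule are_diff[OF A Q D _ X])
    show "transpose_mat X \<in> carrier_mat n n" using X by simp
    show "transpose_mat A * transpose_mat X + transpose_mat X * A + Q - transpose_mat X * D * transpose_mat X = 0\<^sub>m n n"
      using solT unfolding are_solution_def by blast
    show "transpose_mat A * X + X * A + Q - X * D * X = 0\<^sub>m n n"
      using sol unfolding are_solution_def by blast
  qed
  have tr: "transpose_mat (A - D * X) = transpose_mat A - transpose_mat X * D"
    using transpose_minus[OF A mult_carrier_mat[OF D X]] transpose_mult[OF D X] Ds by simp
  have M: "A - D * X \<in> carrier_mat n n" using A D X by auto
  have K: "transpose_mat X - X \<in> carrier_mat n n" using X by auto
  have e2: "transpose_mat (A - D * X) * (transpose_mat X - X) + (transpose_mat X - X) * (A - D * X) = 0\<^sub>m n n"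
    unfolding tr by (rule e)
  have "transpose_mat X - X = 0\<^sub>m n n"
    by (rule sylvester_real[OF M M K h h e2])
  thus ?thesis using minus_zero_eq[of "transpose_mat X" n n X] X by simp
qed

lemma stabilizing_unique:
  fixes A Q D X1 X2 :: "real mat"
  assumes A: "A \<in> carrier_mat n n" and Q: "Q \<in> carrier_mat n n" and D: "D \<in> carrier_mat n n"
    and Qs: "transpose_mat Q = Q" and Ds: "transpose_mat D = D"
    and st1: "stabilizing_solution n A Q D X1" and st2: "stabilizing_solution n A Q D X2"
  shows "X1 = X2"
proof -
  have sol1: "are_solution n A Q D X1" and h1: "hurwitz (A - D * X1)" using st1 unfolding stabilizing_solution_def by auto
  have sol2: "are_solution n A Q D X2" and h2: "hurwitz (A - D * X2)" using st2 unfolding stabilizing_solution_def by auto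
  have X1: "X1 \<in> carrier_mat n n" using sol1 unfolding are_solution_def by auto
  have X2: "X2 \<in> carrier_mat n n" using sol2 unfolding are_solution_def by auto
  have s1: "transpose_mat X1 = X1" by (rule stabilizing_symmetric[OF A Q D Qs Ds st1])
  have e: "(transpose_mat A - X1 * D) * (X1 - X2) + (X1 - X2) * (A - D * X2) = 0\<^sub>m n n"
  proof (rule are_diff[OF A Q D X1 X2])
    show "transpose_mat A * X1 + X1 * A + Q - X1 * D * X1 = 0\<^sub>m n n"
      using sol1 unfolding are_solution_def by blast
    show "transpose_mat A * X2 + X2 * A + Q - X2 * D * X2 = 0\<^sub>m n n"
      using sol2 unfolding are_solution_def by blast
  qed
  have tr: "transpose_mat (A - D * X1) = transpose_mat A - X1 * D"
    using transpose_minus[OF A mult_carrier_mat[OF D X1]] transpose_mult[OF D X1] Ds s1 by simp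
  have M1: "A - D * X1 \<in> carrier_mat n n" using A D X1 by auto
  have M2: "A - D * X2 \<in> carrier_mat n n" using A D X2 by auto
  have K: "X1 - X2 \<in> carrier_mat n n" using X2 by (rule minus_carrier_mat)
  have e2: "transpose_mat (A - D * X1) * (X1 - X2) + (X1 - X2) * (A - D * X2) = 0\<^sub>m n n"
    unfolding tr by (rule e)
  have "X1 - X2 = 0\<^sub>m n n"
    by (rule sylvester_real[OF M1 M2 K h1 h2 e2])
  thus ?thesis using minus_zero_eq[of X1 n n X2] X1 X2 by simp
qed

lemma sq_carrier[simp]:
  "M \<in> carrier_mat n n \<Longrightarrow> v \<in> carrier_vec n \<Longrightarrow> M *\<^sub>v v \<in> carrier_vec n"
  "M \<in> carrier_mat n n \<Longrightarrow> N \<in> carrier_mat n n \<Longrightarrow> M * N \<in> carrier_mat n n"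
  "M \<in> carrier_mat n n \<Longrightarrow> N \<in> carrier_mat n n \<Longrightarrow> M + N \<in> carrier_mat n n"
  "M \<in> carrier_mat n n \<Longrightarrow> N \<in> carrier_mat n n \<Longrightarrow> M - N \<in> carrier_mat n n"
  by auto

lemma cmat_hamiltonian:
  assumes A: "A \<in> carrier_mat n n" and D: "D \<in> carrier_mat n n" and Q: "Q \<in> carrier_mat n n"
  shows "cmat (hamiltonian A D Q) = four_block_mat (cmat A) (- cmat D) (- cmat Q) (- transpose_mat (cmat A))"
  unfolding hamiltonian_def cmat_def by (rule eq_matI, insert A D Q, auto)

lemma hc_mult:
  assumes A: "A \<in> carrier_mat n n" and D: "D \<in> carrier_mat n n" and Q: "Q \<in> carrier_mat n n"
    and x: "x \<in> carrier_vec n" and y: "y \<in> carrier_vec n"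
  shows "cmat (hamiltonian A D Q) *\<^sub>v (x @\<^sub>v y) =
    (cmat A *\<^sub>v x - cmat D *\<^sub>v y) @\<^sub>v (- (cmat Q *\<^sub>v x) - transpose_mat (cmat A) *\<^sub>v y)"
proof -
  have "cmat (hamiltonian A D Q) *\<^sub>v (x @\<^sub>v y) =
    (cmat A *\<^sub>v x + (- cmat D) *\<^sub>v y) @\<^sub>v ((- cmat Q) *\<^sub>v x + (- transpose_mat (cmat A)) *\<^sub>v y)"
    unfolding cmat_hamiltonian[OF A D Q]
    by (rule four_block_mat_mult_vec, insert A D Q x y, auto)
  also have "\<dots> = (cmat A *\<^sub>v x - cmat D *\<^sub>v y) @\<^sub>v (- (cmat Q *\<^sub>v x) - transpose_mat (cmat A) *\<^sub>v y)"
    by (rule arg_cong2[of _ _ _ _ "(@\<^sub>v)"]; rule eq_vecI, insert A D Q x y, auto)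
  finally show ?thesis .
qed

lemma are_vec:
  fixes A Q D P :: "real mat"
  assumes A: "A \<in> carrier_mat n n" and Q: "Q \<in> carrier_mat n n" and D: "D \<in> carrier_mat n n"
    and sol: "are_solution n A Q D P" and x: "x \<in> carrier_vec n" and i: "i < n"
  shows "(transpose_mat (cmat A) *\<^sub>v (cmat P *\<^sub>v x)) $ i + (cmat P *\<^sub>v (cmat A *\<^sub>v x)) $ i
    + (cmat Q *\<^sub>v x) $ i - (cmat P *\<^sub>v (cmat D *\<^sub>v (cmat P *\<^sub>v x))) $ i = 0"
proof -
  have P: "P \<in> carrier_mat n n" and R: "transpose_mat A * P + P * A + Q - P * D * P = 0\<^sub>m n n"
    using sol unfolding are_solution_def by auto
  have "cmat (transpose_mat A * P + P * A + Q - P * D * P) = 0\<^sub>m n n" using R by (simp add: cmat_zero)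
  hence "transpose_mat (cmat A) * cmat P + cmat P * cmat A + cmat Q - cmat P * cmat D * cmat P = 0\<^sub>m n n"
    using A Q D P
    by (simp add: cmat_add[of _ n n] cmat_minus[of _ n n] cmat_mult[of _ n n _ n] cmat_transpose)
  hence "((transpose_mat (cmat A) * cmat P + cmat P * cmat A + cmat Q - cmat P * cmat D * cmat P) *\<^sub>v x) $ i = 0"
    using x i by simp
  thus ?thesis
    using A Q D P x i
    by (simp add: add_mult_distrib_mat_vec[of _ n n] minus_mult_distrib_mat_vec[of _ n n]
          assoc_mult_mat_vec[of _ n n _ n] del: index_mult_mat_vec)
qed


lemma cmat_are_expr:
  fixes A Q D P :: "real mat"
  assumes A: "A \<in> carrier_mat n n" and Q: "Q \<in> carrier_mat n n" and D: "D \<in> carrier_mat n n"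
    and P: "P \<in> carrier_mat n n"
  shows "cmat (transpose_mat A * P + P * A + Q - P * D * P)
    = transpose_mat (cmat A) * cmat P + cmat P * cmat A + cmat Q - cmat P * cmat D * cmat P"
  using A Q D P
  by (simp add: cmat_add[of _ n n] cmat_minus[of _ n n] cmat_mult[of _ n n _ n] cmat_transpose)

lemma H_S:
  fixes A Q D P :: "real mat"
  assumes A: "A \<in> carrier_mat n n" and Q: "Q \<in> carrier_mat n n" and D: "D \<in> carrier_mat n n"
    and sol: "are_solution n A Q D P" and x: "x \<in> carrier_vec n"
  shows "cmat (hamiltonian A D Q) *\<^sub>v (x @\<^sub>v (cmat P *\<^sub>v x)) =
    (cmat (A - D * P) *\<^sub>v x) @\<^sub>v (cmat P *\<^sub>v (cmat (A - D * P) *\<^sub>v x))"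
proof -
  have P: "P \<in> carrier_mat n n" using sol unfolding are_solution_def by auto
  have cM: "cmat (A - D * P) = cmat A - cmat D * cmat P"
    using A D P by (simp add: cmat_minus[of _ n n] cmat_mult[of _ n n _ n])
  have Px: "cmat P *\<^sub>v x \<in> carrier_vec n" using P x by simp
  show ?thesis
    unfolding hc_mult[OF A D Q x Px] cM
  proof (rule arg_cong2[of _ _ _ _ "(@\<^sub>v)"])
    show "cmat A *\<^sub>v x - cmat D *\<^sub>v (cmat P *\<^sub>v x) = (cmat A - cmat D * cmat P) *\<^sub>v x"
      by (rule eq_vecI, insert A D P x,
          auto simp: minus_mult_distrib_mat_vec[of _ n n] assoc_mult_mat_vec[of _ n n _ n] simp del: index_mult_mat_vec)
    show "- (cmat Q *\<^sub>v x) - transpose_mat (cmat A) *\<^sub>v (cmat P *\<^sub>v x) =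
      cmat P *\<^sub>v ((cmat A - cmat D * cmat P) *\<^sub>v x)"
    proof (rule eq_vecI)
      fix i assume "i < dim_vec (cmat P *\<^sub>v ((cmat A - cmat D * cmat P) *\<^sub>v x))"
      hence i: "i < n" using P by simp
      from are_vec[OF A Q D sol x i] show "(- (cmat Q *\<^sub>v x) - transpose_mat (cmat A) *\<^sub>v (cmat P *\<^sub>v x)) $ i =
        (cmat P *\<^sub>v ((cmat A - cmat D * cmat P) *\<^sub>v x)) $ i"
        using A D P Q x i
        by (simp add: minus_mult_distrib_mat_vec[of _ n n] mult_minus_distrib_mat_vec[of _ n n]
            assoc_mult_mat_vec[of _ n n _ n] del: index_mult_mat_vec) (simp add: algebra_simps)
    qed (use A P Q x in auto)
  qed
qed

lemma S_inv_are:
  fixes A Q D P :: "real mat"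
  assumes A: "A \<in> carrier_mat n n" and Q: "Q \<in> carrier_mat n n" and D: "D \<in> carrier_mat n n"
    and P: "P \<in> carrier_mat n n"
    and inv: "\<And>x. x \<in> carrier_vec n \<Longrightarrow> \<exists>y \<in> carrier_vec n.
       cmat (hamiltonian A D Q) *\<^sub>v (x @\<^sub>v (cmat P *\<^sub>v x)) = y @\<^sub>v (cmat P *\<^sub>v y)"
  shows "are_solution n A Q D P"
proof -
  let ?E = "transpose_mat A * P + P * A + Q - P * D * P"
  let ?cE = "transpose_mat (cmat A) * cmat P + cmat P * cmat A + cmat Q - cmat P * cmat D * cmat P"
  have cE: "?cE \<in> carrier_mat n n" using A Q D P by simp
  have "?cE = 0\<^sub>m n n"
  proof (rule mat_eq_zero_by_vec[OF cE])
    fix x :: "complex vec" assume x: "x \<in> carrier_vec n"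
    have Px: "cmat P *\<^sub>v x \<in> carrier_vec n" using P x by simp
    obtain y where y: "y \<in> carrier_vec n" and e: "cmat (hamiltonian A D Q) *\<^sub>v (x @\<^sub>v (cmat P *\<^sub>v x)) = y @\<^sub>v (cmat P *\<^sub>v y)"
      using inv[OF x] by blast
    have c1: "cmat A *\<^sub>v x - cmat D *\<^sub>v (cmat P *\<^sub>v x) \<in> carrier_vec n" using A D P x by simp
    have ee: "cmat A *\<^sub>v x - cmat D *\<^sub>v (cmat P *\<^sub>v x) = y \<and>
       - (cmat Q *\<^sub>v x) - transpose_mat (cmat A) *\<^sub>v (cmat P *\<^sub>v x) = cmat P *\<^sub>v y"
      by (rule iffD1[OF append_vec_eq[OF c1 y]], rule e[unfolded hc_mult[OF A D Q x Px]])
    hence e1: "cmat A *\<^sub>v x - cmat D *\<^sub>v (cmat P *\<^sub>v x) = y"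
      and e2: "- (cmat Q *\<^sub>v x) - transpose_mat (cmat A) *\<^sub>v (cmat P *\<^sub>v x) = cmat P *\<^sub>v y" by auto
    show "?cE *\<^sub>v x = 0\<^sub>v n"
    proof (rule eq_vecI)
      fix i assume "i < dim_vec (0\<^sub>v n :: complex vec)"
      hence i: "i < n" by simp
      have "(- (cmat Q *\<^sub>v x) - transpose_mat (cmat A) *\<^sub>v (cmat P *\<^sub>v x)) $ i
         = (cmat P *\<^sub>v (cmat A *\<^sub>v x - cmat D *\<^sub>v (cmat P *\<^sub>v x))) $ i"
        using e1 e2 by simp
      thus "(?cE *\<^sub>v x) $ i = 0\<^sub>v n $ i"
        using A D P Q x i
        by (simp add: minus_mult_distrib_mat_vec[of _ n n] mult_minus_distrib_mat_vec[of _ n n]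
            add_mult_distrib_mat_vec[of _ n n]
            assoc_mult_mat_vec[of _ n n _ n] del: index_mult_mat_vec) (simp add: algebra_simps)
    qed (use cE in auto)
  qed
  hence "cmat ?E = cmat (0\<^sub>m n n)" using cmat_are_expr[OF A Q D P] by (simp add: cmat_zero)
  hence "?E = 0\<^sub>m n n" by (rule cmat_inj)
  thus ?thesis using P unfolding are_solution_def by simp
qed

lemma smult_append_vec: "a \<cdot>\<^sub>v (x @\<^sub>v y) = (a \<cdot>\<^sub>v x) @\<^sub>v (a \<cdot>\<^sub>v y)"
  by (rule eq_vecI) auto

lemma transpose_cmat_M:
  fixes A D P :: "real mat"
  assumes A: "A \<in> carrier_mat n n" and D: "D \<in> carrier_mat n n" and P: "P \<in> carrier_mat n n"
    and Ds: "transpose_mat D = D" and Ps: "transpose_mat P = P"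
  shows "transpose_mat (cmat (A - D * P)) = transpose_mat (cmat A) - cmat P * cmat D"
proof -
  have "transpose_mat (A - D * P) = transpose_mat A - P * D"
    using transpose_minus[OF A mult_carrier_mat[OF D P]] transpose_mult[OF D P] Ds Ps by simp
  hence "transpose_mat (cmat (A - D * P)) = cmat (transpose_mat A - P * D)" by (simp add: cmat_transpose[symmetric])
  also have "\<dots> = transpose_mat (cmat A) - cmat P * cmat D"
    using A D P by (simp add: cmat_minus[of _ n n] cmat_mult[of _ n n _ n] cmat_transpose)
  finally show ?thesis .
qed

lemma lin_helper1:
  fixes pa :: complex
  assumes h1: "pa - pdy = mu * px" and h2: "- qx - aty = mu * y" and h3: "atpx + pa + qx = pdpx"
  shows "aty - pdy - atpx + pdpx = - mu * (y - px)"
proof -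
  have "(aty - pdy - atpx + pdpx) - (- mu * (y - px)) =
    (pa - pdy - mu * px) - (- qx - aty - mu * y) - (atpx + pa + qx - pdpx)"
    by (simp add: algebra_simps)
  also have "\<dots> = 0" using h1 h2 h3 by simp
  finally show ?thesis by (simp only: right_minus_eq)
qed

lemma eig_loc:
  fixes A Q D P :: "real mat"
  assumes A: "A \<in> carrier_mat n n" and Q: "Q \<in> carrier_mat n n" and D: "D \<in> carrier_mat n n"
    and Qs: "transpose_mat Q = Q" and Ds: "transpose_mat D = D"
    and st: "stabilizing_solution n A Q D P"
    and v: "v \<in> carrier_vec (n+n)" and v0: "v \<noteq> 0\<^sub>v (n+n)"
    and ev: "cmat (hamiltonian A D Q) *\<^sub>v v = \<mu> \<cdot>\<^sub>v v"
  shows "Re \<mu> \<noteq> 0 \<and> (Re \<mu> < 0 \<longrightarrow> vec_last v n = cmat P *\<^sub>v vec_first v n)"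
proof -
  have sol: "are_solution n A Q D P" and h: "hurwitz (A - D * P)" using st unfolding stabilizing_solution_def by auto
  have P: "P \<in> carrier_mat n n" using sol unfolding are_solution_def by auto
  have Ps: "transpose_mat P = P" by (rule stabilizing_symmetric[OF A Q D Qs Ds st])
  define x where "x = vec_first v n"
  define y where "y = vec_last v n"
  have x: "x \<in> carrier_vec n" and y: "y \<in> carrier_vec n" unfolding x_def y_def by auto
  have vxy: "v = x @\<^sub>v y" unfolding x_def y_def using v by simp
  have c1: "cmat A *\<^sub>v x - cmat D *\<^sub>v y \<in> carrier_vec n" using A D x y by simp
  have "cmat A *\<^sub>v x - cmat D *\<^sub>v y = \<mu> \<cdot>\<^sub>v x \<and> - (cmat Q *\<^sub>v x) - transpose_mat (cmat A) *\<^sub>v y = \<mu> \<cdot>\<^sub>v y"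
    by (rule iffD1[OF append_vec_eq[OF c1, of "\<mu> \<cdot>\<^sub>v x"]], use x in simp,
        insert ev, unfold vxy hc_mult[OF A D Q x y] smult_append_vec)
  hence e1: "cmat A *\<^sub>v x - cmat D *\<^sub>v y = \<mu> \<cdot>\<^sub>v x"
    and e2: "- (cmat Q *\<^sub>v x) - transpose_mat (cmat A) *\<^sub>v y = \<mu> \<cdot>\<^sub>v y" by auto
  have e1P: "cmat P *\<^sub>v (cmat A *\<^sub>v x - cmat D *\<^sub>v y) = cmat P *\<^sub>v (\<mu> \<cdot>\<^sub>v x)" using e1 by simp
  define z where "z = y - cmat P *\<^sub>v x"
  have z: "z \<in> carrier_vec n" unfolding z_def using y P x by simp
  let ?M = "cmat (A - D * P)"
  have MT: "transpose_mat ?M = transpose_mat (cmat A) - cmat P * cmat D"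
    by (rule transpose_cmat_M[OF A D P Ds Ps])
  have zeq: "transpose_mat ?M *\<^sub>v z = (- \<mu>) \<cdot>\<^sub>v z"
  proof (rule eq_vecI)
    fix i assume "i < dim_vec ((- \<mu>) \<cdot>\<^sub>v z)"
    hence i: "i < n" using z by simp
    let ?pa = "(cmat P *\<^sub>v (cmat A *\<^sub>v x)) $ i" and ?pdy = "(cmat P *\<^sub>v (cmat D *\<^sub>v y)) $ i"
      and ?px = "(cmat P *\<^sub>v x) $ i" and ?qx = "(cmat Q *\<^sub>v x) $ i"
      and ?aty = "(transpose_mat (cmat A) *\<^sub>v y) $ i"
      and ?atpx = "(transpose_mat (cmat A) *\<^sub>v (cmat P *\<^sub>v x)) $ i"
      and ?pdpx = "(cmat P *\<^sub>v (cmat D *\<^sub>v (cmat P *\<^sub>v x))) $ i"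
    have f1: "?pa - ?pdy = \<mu> * ?px"
      using arg_cong[OF e1P, of "\<lambda>u. u $ i"] A D P x y i
      by (simp add: mult_minus_distrib_mat_vec[of _ n n] mult_mat_vec[of _ n n] del: index_mult_mat_vec)
    have f2: "- ?qx - ?aty = \<mu> * y $ i"
      using arg_cong[OF e2, of "\<lambda>u. u $ i"] A Q x y i by (simp del: index_mult_mat_vec)
    have f3: "?atpx + ?pa + ?qx = ?pdpx"
      using are_vec[OF A Q D sol x i] by (simp add: algebra_simps del: index_mult_mat_vec)
    have L: "(transpose_mat ?M *\<^sub>v z) $ i = ?aty - ?pdy - ?atpx + ?pdpx"
      unfolding MT z_def using A D P x y i
      by (simp add: minus_mult_distrib_mat_vec[of _ n n] mult_minus_distrib_mat_vec[of _ n n]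
            assoc_mult_mat_vec[of _ n n _ n] del: index_mult_mat_vec)
    have R: "((- \<mu>) \<cdot>\<^sub>v z) $ i = - \<mu> * (y $ i - ?px)"
      unfolding z_def using P x y i by (simp del: index_mult_mat_vec)
    show "(transpose_mat ?M *\<^sub>v z) $ i = ((- \<mu>) \<cdot>\<^sub>v z) $ i"
      unfolding L R by (rule lin_helper1[OF f1 f2 f3])
  qed (use z A P in auto)
  have M: "?M \<in> carrier_mat n n" using A D P by simp
  show ?thesis
  proof (cases "z = 0\<^sub>v n")
    case False
    have "eigenvalue (transpose_mat ?M) (- \<mu>)"
      unfolding eigenvalue_def eigenvector_def using zeq z False M P by auto
    have M0: "A - D * P \<in> carrier_mat n n" using A D P by simp
    have "Re (- \<mu>) < 0" by (rule hurwitz_transpose_eig[OF M0 h \<open>eigenvalue (transpose_mat ?M) (- \<mu>)\<close>])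
    thus ?thesis by simp
  next
    case True
    have yPx: "y = cmat P *\<^sub>v x"
      by (rule eq_vecI, insert True y P x, auto simp: z_def vec_eq_iff)
    have "x \<noteq> 0\<^sub>v n"
    proof
      assume "x = 0\<^sub>v n"
      hence "y = 0\<^sub>v n" using yPx P by (auto simp: vec_eq_iff scalar_prod_def)
      with \<open>x = 0\<^sub>v n\<close> have "v = 0\<^sub>v (n+n)" unfolding vxy by (auto simp: vec_eq_iff)
      with v0 show False by simp
    qed
    moreover have "?M *\<^sub>v x = \<mu> \<cdot>\<^sub>v x"
    proof -
      have "?M = cmat A - cmat D * cmat P" using A D P by (simp add: cmat_minus[of _ n n] cmat_mult[of _ n n _ n])
      hence "?M *\<^sub>v x = cmat A *\<^sub>v x - cmat D *\<^sub>v y"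
        unfolding yPx using A D P x by (simp add: minus_mult_distrib_mat_vec[of _ n n] assoc_mult_mat_vec[of _ n n _ n])
      thus ?thesis using e1 by simp
    qed
    ultimately have "eigenvalue ?M \<mu>" unfolding eigenvalue_def eigenvector_def using x M D by auto
    hence "Re \<mu> < 0" using h hurwitz_eig by blast
    thus ?thesis using yPx unfolding x_def y_def by simp
  qed
qed

lemma vec_eq_by_unit:
  fixes u v :: "'a::comm_ring_1 vec"
  assumes u: "u \<in> carrier_vec n" and v: "v \<in> carrier_vec n"
    and h: "\<And>j. j < n \<Longrightarrow> u $ j = v $ j"
  shows "u = v"
  by (rule eq_vecI, insert u v h, auto)

lemma left_annih:
  fixes A Q D P :: "real mat"
  assumes A: "A \<in> carrier_mat n n" and Q: "Q \<in> carrier_mat n n" and D: "D \<in> carrier_mat n n"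
    and Qs: "transpose_mat Q = Q" and Ds: "transpose_mat D = D"
    and st: "stabilizing_solution n A Q D P"
    and b: "b \<in> carrier_vec (n+n)"
    and lb: "\<And>w. w \<in> carrier_vec (n+n) \<Longrightarrow> b \<bullet> (cmat (hamiltonian A D Q) *\<^sub>v w) = \<nu> * (b \<bullet> w)"
    and nu: "Re \<nu> > 0" and x: "x \<in> carrier_vec n"
  shows "b \<bullet> (x @\<^sub>v (cmat P *\<^sub>v x)) = 0"
proof -
  have sol: "are_solution n A Q D P" and h: "hurwitz (A - D * P)" using st unfolding stabilizing_solution_def by auto
  have P: "P \<in> carrier_mat n n" using sol unfolding are_solution_def by auto
  have Ps: "transpose_mat P = P" by (rule stabilizing_symmetric[OF A Q D Qs Ds st])
  define b1 where "b1 = vec_first b n"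
  define b2 where "b2 = vec_last b n"
  have b1: "b1 \<in> carrier_vec n" and b2: "b2 \<in> carrier_vec n" unfolding b1_def b2_def by auto
  have bb: "b = b1 @\<^sub>v b2" unfolding b1_def b2_def using b by simp
  define r where "r = b1 + cmat P *\<^sub>v b2"
  have r: "r \<in> carrier_vec n" unfolding r_def using b1 b2 P by simp
  have cPt: "transpose_mat (cmat P) = cmat P" using Ps by (metis cmat_transpose)
  have f: "b \<bullet> (y @\<^sub>v (cmat P *\<^sub>v y)) = r \<bullet> y" if y: "y \<in> carrier_vec n" for y
  proof -
    have "b \<bullet> (y @\<^sub>v (cmat P *\<^sub>v y)) = b1 \<bullet> y + b2 \<bullet> (cmat P *\<^sub>v y)"
      unfolding bb by (rule scalar_prod_append[OF b1 b2 y], use P y in simp)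
    also have "b2 \<bullet> (cmat P *\<^sub>v y) = (transpose_mat (cmat P) *\<^sub>v b2) \<bullet> y"
      by (rule transpose_vec_mult_scalar[symmetric], use P y b2 in auto)
    also have "b1 \<bullet> y + (transpose_mat (cmat P) *\<^sub>v b2) \<bullet> y = r \<bullet> y"
      unfolding r_def cPt by (rule add_scalar_prod_distrib[symmetric, OF b1 _ y], use P b2 in simp)
    finally show ?thesis .
  qed
  let ?M = "cmat (A - D * P)"
  have M: "?M \<in> carrier_mat n n" using A D P by simp
  have key: "r \<bullet> (?M *\<^sub>v y) = \<nu> * (r \<bullet> y)" if y: "y \<in> carrier_vec n" for y
  proof -
    have My: "?M *\<^sub>v y \<in> carrier_vec n" using M y by simp
    have Py: "cmat P *\<^sub>v y \<in> carrier_vec n" using P y by simp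
    have "r \<bullet> (?M *\<^sub>v y) = b \<bullet> ((?M *\<^sub>v y) @\<^sub>v (cmat P *\<^sub>v (?M *\<^sub>v y)))" using f[OF My] by simp
    also have "\<dots> = b \<bullet> (cmat (hamiltonian A D Q) *\<^sub>v (y @\<^sub>v (cmat P *\<^sub>v y)))"
      using H_S[OF A Q D sol y] by simp
    also have "\<dots> = \<nu> * (b \<bullet> (y @\<^sub>v (cmat P *\<^sub>v y)))" by (rule lb, use y Py in simp)
    also have "\<dots> = \<nu> * (r \<bullet> y)" using f[OF y] by simp
    finally show ?thesis .
  qed
  have Mr: "transpose_mat ?M *\<^sub>v r = \<nu> \<cdot>\<^sub>v r"
  proof (rule vec_eq_by_unit[of _ n])
    show "transpose_mat ?M *\<^sub>v r \<in> carrier_vec n" using M r by simp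
    show "\<nu> \<cdot>\<^sub>v r \<in> carrier_vec n" using r by simp
    fix j assume j: "j < n"
    have "(transpose_mat ?M *\<^sub>v r) $ j = (transpose_mat ?M *\<^sub>v r) \<bullet> unit_vec n j" using j by simp
    also have "\<dots> = r \<bullet> (?M *\<^sub>v unit_vec n j)" by (rule transpose_vec_mult_scalar[OF M _ r], simp)
    also have "\<dots> = \<nu> * (r \<bullet> unit_vec n j)" by (rule key, simp)
    also have "\<dots> = (\<nu> \<cdot>\<^sub>v r) $ j" using j r by simp
    finally show "(transpose_mat ?M *\<^sub>v r) $ j = (\<nu> \<cdot>\<^sub>v r) $ j" .
  qed
  have "r = 0\<^sub>v n"
  proof (rule ccontr)
    assume "r \<noteq> 0\<^sub>v n"
    hence "eigenvalue (transpose_mat ?M) \<nu>" unfolding eigenvalue_def eigenvector_def using Mr r M P by auto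
    hence "Re \<nu> < 0" using hurwitz_transpose_eig[of "A - D * P" n] A D P h by auto
    with nu show False by simp
  qed
  thus ?thesis using f[OF x] x by simp
qed


lemma cmat_mult_vec_index:
  assumes i: "i < dim_row M" and v: "dim_vec v = dim_col M"
  shows "(cmat M *\<^sub>v v) $ i = (\<Sum>k = 0..<dim_col M. complex_of_real (M $$ (i,k)) * v $ k)"
  using i v unfolding cmat_def by (auto simp: scalar_prod_def intro!: sum.cong)

lemma cnj_scalar:
  assumes "dim_vec u = dim_vec w"
  shows "map_vec cnj u \<bullet> map_vec cnj w = cnj (u \<bullet> w)"
  using assms by (simp add: scalar_prod_def cnj_sum)

lemma cnj_cnj_vec[simp]: "map_vec cnj (map_vec cnj u) = u"
  by (rule eq_vecI) auto

lemma cnj_append_vec: "map_vec cnj (x @\<^sub>v y) = map_vec cnj x @\<^sub>v map_vec cnj y"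
  by (rule eq_vecI) auto

lemma cnj_smult_vec: "map_vec cnj (a \<cdot>\<^sub>v v) = cnj a \<cdot>\<^sub>v map_vec cnj v"
  by (rule eq_vecI) auto

lemma cmat_mult_cnj:
  assumes v: "dim_vec v = dim_col M"
  shows "cmat M *\<^sub>v map_vec cnj v = map_vec cnj (cmat M *\<^sub>v v)"
proof (rule eq_vecI)
  fix i assume i: "i < dim_vec (map_vec cnj (cmat M *\<^sub>v v))"
  hence i': "i < dim_row M" by simp
  show "(cmat M *\<^sub>v map_vec cnj v) $ i = map_vec cnj (cmat M *\<^sub>v v) $ i"
  proof -
    have "(cmat M *\<^sub>v map_vec cnj v) $ i = (\<Sum>k = 0..<dim_col M. complex_of_real (M $$ (i,k)) * map_vec cnj v $ k)"
      by (rule cmat_mult_vec_index[OF i'], use v in simp)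
    also have "\<dots> = cnj (\<Sum>k = 0..<dim_col M. complex_of_real (M $$ (i,k)) * v $ k)"
      unfolding cnj_sum using v by (intro sum.cong) auto
    also have "\<dots> = cnj ((cmat M *\<^sub>v v) $ i)" by (subst cmat_mult_vec_index[OF i' v], rule refl)
    also have "\<dots> = map_vec cnj (cmat M *\<^sub>v v) $ i" using i' by simp
    finally show ?thesis .
  qed
qed simp

lemma cnj_first_last:
  assumes "dim_vec v = n + m"
  shows "vec_first (map_vec cnj v) n = map_vec cnj (vec_first v n)"
    "vec_last (map_vec cnj v) m = map_vec cnj (vec_last v m)"
  unfolding vec_first_def vec_last_def using assms by (auto intro!: eq_vecI)

lemma left_eig_cnj:
  fixes H :: "real mat"
  assumes H: "H \<in> carrier_mat N N" and b: "b \<in> carrier_vec N"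
    and lb: "\<And>w. w \<in> carrier_vec N \<Longrightarrow> b \<bullet> (cmat H *\<^sub>v w) = \<nu> * (b \<bullet> w)"
    and w: "w \<in> carrier_vec N"
  shows "map_vec cnj b \<bullet> (cmat H *\<^sub>v w) = cnj \<nu> * (map_vec cnj b \<bullet> w)"
proof -
  have cw: "map_vec cnj w \<in> carrier_vec N" using w by simp
  have "map_vec cnj b \<bullet> (cmat H *\<^sub>v w) = map_vec cnj b \<bullet> map_vec cnj (map_vec cnj (cmat H *\<^sub>v w))" by simp
  also have "\<dots> = cnj (b \<bullet> map_vec cnj (cmat H *\<^sub>v w))" by (rule cnj_scalar, use b H in simp)
  also have "map_vec cnj (cmat H *\<^sub>v w) = cmat H *\<^sub>v map_vec cnj w"
    by (rule cmat_mult_cnj[symmetric], use w H in simp)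
  also have "b \<bullet> (cmat H *\<^sub>v map_vec cnj w) = \<nu> * (b \<bullet> map_vec cnj w)" by (rule lb[OF cw])
  also have "cnj (\<nu> * (b \<bullet> map_vec cnj w)) = cnj \<nu> * cnj (b \<bullet> map_vec cnj w)" by simp
  also have "cnj (b \<bullet> map_vec cnj w) = map_vec cnj b \<bullet> w"
    using cnj_scalar[of b "map_vec cnj w"] b w by simp
  finally show ?thesis .
qed

lemma right_eig_cnj:
  fixes H :: "real mat"
  assumes H: "H \<in> carrier_mat N N" and a: "a \<in> carrier_vec N"
    and ev: "cmat H *\<^sub>v a = \<nu> \<cdot>\<^sub>v a"
  shows "cmat H *\<^sub>v map_vec cnj a = cnj \<nu> \<cdot>\<^sub>v map_vec cnj a"
  using cmat_mult_cnj[of a H] ev H a by (simp add: cnj_smult_vec)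


lemma J_mult:
  assumes x: "x \<in> carrier_vec n" and y: "y \<in> carrier_vec n"
  shows "Jmat n *\<^sub>v (x @\<^sub>v y) = y @\<^sub>v (- x)"
proof -
  have "Jmat n *\<^sub>v (x @\<^sub>v y) = (0\<^sub>m n n *\<^sub>v x + 1\<^sub>m n *\<^sub>v y) @\<^sub>v ((- 1\<^sub>m n) *\<^sub>v x + 0\<^sub>m n n *\<^sub>v y)"
    unfolding Jmat_def by (rule four_block_mat_mult_vec, insert x y, auto)
  also have "\<dots> = y @\<^sub>v (- x)"
    by (rule arg_cong2[of _ _ _ _ "(@\<^sub>v)"]; rule eq_vecI, insert x y, auto)
  finally show ?thesis .
qed

lemma J_dims[simp]: "dim_row (Jmat n) = n + n" "dim_col (Jmat n) = n + n"
  unfolding Jmat_def by auto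

lemma J_carrier: "u \<in> carrier_vec (n+n) \<Longrightarrow> Jmat n *\<^sub>v u \<in> carrier_vec (n+n)"
  unfolding Jmat_def by simp

lemma J_index:
  assumes u: "u \<in> carrier_vec (n+n)" and k: "k < n + n"
  shows "(Jmat n *\<^sub>v u) $ k = (if k < n then u $ (k + n) else - u $ (k - n))"
proof -
  have "u = vec_first u n @\<^sub>v vec_last u n" using u by simp
  hence "(Jmat n *\<^sub>v u) $ k = (vec_last u n @\<^sub>v (- vec_first u n)) $ k"
    using J_mult[of "vec_first u n" n "vec_last u n"] by simp
  thus ?thesis using k u unfolding vec_first_def vec_last_def by (auto simp: add.commute)
qed

lemma J_smult: "u \<in> carrier_vec (n+n) \<Longrightarrow> Jmat n *\<^sub>v (c \<cdot>\<^sub>v u) = c \<cdot>\<^sub>v (Jmat n *\<^sub>v u)"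
  by (rule mult_mat_vec[of _ "n+n" "n+n"], unfold Jmat_def, auto)

lemma sum_shift_n: fixes f :: "nat \<Rightarrow> 'a::comm_monoid_add"
  shows "(\<Sum>k = n..<n + n. f k) = (\<Sum>k = 0..<n. f (k + n))"
  using sum.shift_bounds_nat_ivl[of f 0 n n] by simp

lemma J_antisym:
  assumes u: "u \<in> carrier_vec (n+n)" and w: "w \<in> carrier_vec (n+n)"
  shows "(Jmat n *\<^sub>v u) \<bullet> w = - (u \<bullet> (Jmat n *\<^sub>v w))"
proof -
  have "(Jmat n *\<^sub>v u) \<bullet> w = (\<Sum>k = 0..<n+n. (if k < n then u $ (k + n) else - u $ (k - n)) * w $ k)"
    unfolding scalar_prod_def using u w by (intro sum.cong) (auto simp: J_index[OF u] simp del: index_mult_mat_vec)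
  also have "\<dots> = (\<Sum>k = 0..<n. u $ (k + n) * w $ k) + (\<Sum>k = n..<n+n. - u $ (k - n) * w $ k)"
    by (subst sum.atLeastLessThan_concat[of 0 n "n+n", symmetric]) (auto intro!: arg_cong2[of _ _ _ _ "(+)"] sum.cong)
  also have "(\<Sum>k = n..<n+n. - u $ (k - n) * w $ k) = (\<Sum>k = 0..<n. - u $ k * w $ (k + n))"
    by (subst sum_shift_n) simp
  finally have L: "(Jmat n *\<^sub>v u) \<bullet> w = (\<Sum>k = 0..<n. u $ (k + n) * w $ k) + (\<Sum>k = 0..<n. - u $ k * w $ (k + n))" .
  have "u \<bullet> (Jmat n *\<^sub>v w) = (\<Sum>k = 0..<n+n. u $ k * (if k < n then w $ (k + n) else - w $ (k - n)))"
    unfolding scalar_prod_def using u w by (intro sum.cong) (auto simp: J_index[OF w] simp del: index_mult_mat_vec)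
  also have "\<dots> = (\<Sum>k = 0..<n. u $ k * w $ (k + n)) + (\<Sum>k = n..<n+n. - u $ k * w $ (k - n))"
    by (subst sum.atLeastLessThan_concat[of 0 n "n+n", symmetric]) (auto intro!: arg_cong2[of _ _ _ _ "(+)"] sum.cong)
  also have "(\<Sum>k = n..<n+n. - u $ k * w $ (k - n)) = (\<Sum>k = 0..<n. - u $ (k + n) * w $ k)"
    by (subst sum_shift_n) simp
  finally have R: "u \<bullet> (Jmat n *\<^sub>v w) = (\<Sum>k = 0..<n. u $ k * w $ (k + n)) + (\<Sum>k = 0..<n. - u $ (k + n) * w $ k)" .
  show ?thesis unfolding L R by (simp add: sum_negf)
qed


lemma uminus_append_vec: "- (x @\<^sub>v y) = (- x) @\<^sub>v (- y)"
  by (rule eq_vecI) auto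

lemma ham_transpose_J:
  fixes A Q D :: "real mat"
  assumes A: "A \<in> carrier_mat n n" and Q: "Q \<in> carrier_mat n n" and D: "D \<in> carrier_mat n n"
    and Qs: "transpose_mat Q = Q" and Ds: "transpose_mat D = D"
    and u: "u \<in> carrier_vec (n+n)"
  shows "transpose_mat (cmat (hamiltonian A D Q)) *\<^sub>v (Jmat n *\<^sub>v u) = - (Jmat n *\<^sub>v (cmat (hamiltonian A D Q) *\<^sub>v u))"
proof -
  define u1 where "u1 = vec_first u n"
  define u2 where "u2 = vec_last u n"
  have u1: "u1 \<in> carrier_vec n" and u2: "u2 \<in> carrier_vec n" unfolding u1_def u2_def by auto
  have uu: "u = u1 @\<^sub>v u2" unfolding u1_def u2_def using u by simp
  have cQ: "transpose_mat (cmat Q) = cmat Q" using Qs by (metis cmat_transpose)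
  have cD: "transpose_mat (cmat D) = cmat D" using Ds by (metis cmat_transpose)
  have HT: "transpose_mat (cmat (hamiltonian A D Q)) = four_block_mat (transpose_mat (cmat A)) (- cmat Q) (- cmat D) (- cmat A)"
    unfolding cmat_hamiltonian[OF A D Q]
    by (subst transpose_four_block_mat[of _ n n _ n], insert A D Q, auto simp: transpose_uminus cQ cD)
  have "transpose_mat (cmat (hamiltonian A D Q)) *\<^sub>v (Jmat n *\<^sub>v u) =
     (transpose_mat (cmat A) *\<^sub>v u2 + (- cmat Q) *\<^sub>v (- u1)) @\<^sub>v ((- cmat D) *\<^sub>v u2 + (- cmat A) *\<^sub>v (- u1))"
    unfolding HT uu J_mult[OF u1 u2] by (rule four_block_mat_mult_vec, insert A Q D u1 u2, auto)
  also have "\<dots> = - (Jmat n *\<^sub>v (cmat (hamiltonian A D Q) *\<^sub>v u))"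
  proof -
    have c1: "cmat A *\<^sub>v u1 - cmat D *\<^sub>v u2 \<in> carrier_vec n" using A D u1 u2 by simp
    have c2: "- (cmat Q *\<^sub>v u1) - transpose_mat (cmat A) *\<^sub>v u2 \<in> carrier_vec n" using A Q u1 u2 by simp
    show ?thesis
      unfolding uu hc_mult[OF A D Q u1 u2] J_mult[OF c1 c2] uminus_append_vec
      by (rule arg_cong2[of _ _ _ _ "(@\<^sub>v)"]; rule eq_vecI, insert A Q D u1 u2, auto)
  qed
  finally show ?thesis .
qed

lemma ham_identity:
  fixes A Q D :: "real mat"
  assumes A: "A \<in> carrier_mat n n" and Q: "Q \<in> carrier_mat n n" and D: "D \<in> carrier_mat n n"
    and Qs: "transpose_mat Q = Q" and Ds: "transpose_mat D = D"
    and u: "u \<in> carrier_vec (n+n)" and w: "w \<in> carrier_vec (n+n)"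
  shows "(Jmat n *\<^sub>v u) \<bullet> (cmat (hamiltonian A D Q) *\<^sub>v w) = - ((Jmat n *\<^sub>v (cmat (hamiltonian A D Q) *\<^sub>v u)) \<bullet> w)"
proof -
  have H: "cmat (hamiltonian A D Q) \<in> carrier_mat (n+n) (n+n)" unfolding hamiltonian_def using A D Q by simp
  have "(Jmat n *\<^sub>v u) \<bullet> (cmat (hamiltonian A D Q) *\<^sub>v w) =
    (transpose_mat (cmat (hamiltonian A D Q)) *\<^sub>v (Jmat n *\<^sub>v u)) \<bullet> w"
    by (rule transpose_vec_mult_scalar[symmetric, OF H w J_carrier[OF u]])
  also have "\<dots> = (- (Jmat n *\<^sub>v (cmat (hamiltonian A D Q) *\<^sub>v u))) \<bullet> w"
    unfolding ham_transpose_J[OF A Q D Qs Ds u] ..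
  also have "\<dots> = - ((Jmat n *\<^sub>v (cmat (hamiltonian A D Q) *\<^sub>v u)) \<bullet> w)"
    using H u w by simp
  finally show ?thesis .
qed


lemma hamiltonian_carrier[simp]:
  "A \<in> carrier_mat n n \<Longrightarrow> D \<in> carrier_mat n n \<Longrightarrow> Q \<in> carrier_mat n n \<Longrightarrow>
   hamiltonian A D Q \<in> carrier_mat (n+n) (n+n)"
  unfolding hamiltonian_def by simp

lemma outer_prod_carrier[simp]: "outer_prod a b \<in> carrier_mat (dim_vec a) (dim_vec b)"
  unfolding outer_prod_def by simp

lemma outer_prod_index[simp]: "i < dim_vec a \<Longrightarrow> k < dim_vec b \<Longrightarrow> outer_prod a b $$ (i,k) = a $ i * b $ k"
  unfolding outer_prod_def by simp

lemma outer_prod_dims[simp]: "dim_row (outer_prod a b) = dim_vec a" "dim_col (outer_prod a b) = dim_vec b"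
  unfolding outer_prod_def by simp_all

lemma of_real_2Re: "complex_of_real (2 * d * Re z) = complex_of_real d * (z + cnj z)"
  by (simp add: complex_add_cnj)

lemma pert:
  fixes H :: "real mat" and a b a' b' w :: "complex vec"
  assumes H: "H \<in> carrier_mat N N" and a: "a \<in> carrier_vec N" and b: "b \<in> carrier_vec N"
    and a': "a' \<in> carrier_vec N" and b': "b' \<in> carrier_vec N" and w: "w \<in> carrier_vec N"
  shows "cmat (H + (2 * d) \<cdot>\<^sub>m map_mat Re (outer_prod a b + outer_prod a' b')) *\<^sub>v w
    = cmat H *\<^sub>v w + complex_of_real d \<cdot>\<^sub>v ((b \<bullet> w) \<cdot>\<^sub>v a + (b' \<bullet> w) \<cdot>\<^sub>v a'
       + (map_vec cnj b \<bullet> w) \<cdot>\<^sub>v map_vec cnj a + (map_vec cnj b' \<bullet> w) \<cdot>\<^sub>v map_vec cnj a')"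
    (is "cmat ?K *\<^sub>v w = ?R")
proof (rule eq_vecI)
  have O: "outer_prod a' b' \<in> carrier_mat N N" using outer_prod_carrier[of a' b'] a' b' by simp
  have K1: "outer_prod a b + outer_prod a' b' \<in> carrier_mat N N" by (rule add_carrier_mat[OF O])
  have K2: "map_mat Re (outer_prod a b + outer_prod a' b') \<in> carrier_mat N N" using K1 by (simp add: map_carrier_mat)
  have K: "?K \<in> carrier_mat N N" by (rule add_carrier_mat[OF smult_carrier_mat[OF K2]])
  show "dim_vec (cmat ?K *\<^sub>v w) = dim_vec ?R" using K H a by simp
  fix i assume "i < dim_vec ?R"
  hence i: "i < N" using H a' by simp
  have ent: "complex_of_real (?K $$ (i,k)) = complex_of_real (H $$ (i,k)) + complex_of_real d *
      (a $ i * b $ k + a' $ i * b' $ k + cnj (a $ i) * cnj (b $ k) + cnj (a' $ i) * cnj (b' $ k))" if k: "k < N" for k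
  proof -
    have "?K $$ (i,k) = H $$ (i,k) + 2 * d * Re (a $ i * b $ k + a' $ i * b' $ k)"
      using H a b a' b' i k by simp
    hence "complex_of_real (?K $$ (i,k)) = complex_of_real (H $$ (i,k)) + complex_of_real (2 * d * Re (a $ i * b $ k + a' $ i * b' $ k))"
      by simp
    also have "complex_of_real (2 * d * Re (a $ i * b $ k + a' $ i * b' $ k)) = complex_of_real d *
      (a $ i * b $ k + a' $ i * b' $ k + cnj (a $ i) * cnj (b $ k) + cnj (a' $ i) * cnj (b' $ k))"
      unfolding of_real_2Re by (simp add: algebra_simps)
    finally show ?thesis .
  qed
  have "(cmat ?K *\<^sub>v w) $ i = (\<Sum>k = 0..<N. complex_of_real (?K $$ (i,k)) * w $ k)"
  proof -
    have dK: "dim_row ?K = N" "dim_col ?K = N" using K by auto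
    show ?thesis by (rule cmat_mult_vec_index[of i ?K w, unfolded dK]) (use i w in auto)
  qed
  also have "\<dots> = (\<Sum>k = 0..<N. complex_of_real (H $$ (i,k)) * w $ k + complex_of_real d *
      (a $ i * (b $ k * w $ k) + a' $ i * (b' $ k * w $ k) + cnj (a $ i) * (cnj (b $ k) * w $ k) + cnj (a' $ i) * (cnj (b' $ k) * w $ k)))"
  proof (rule sum.cong[OF refl])
    fix k assume "k \<in> {0..<N}"
    hence k: "k < N" by simp
    show "complex_of_real (?K $$ (i,k)) * w $ k = complex_of_real (H $$ (i,k)) * w $ k + complex_of_real d *
      (a $ i * (b $ k * w $ k) + a' $ i * (b' $ k * w $ k) + cnj (a $ i) * (cnj (b $ k) * w $ k) + cnj (a' $ i) * (cnj (b' $ k) * w $ k))"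
      unfolding ent[OF k] by (simp only: distrib_left distrib_right mult.assoc)
  qed
  also have "\<dots> = (\<Sum>k = 0..<N. complex_of_real (H $$ (i,k)) * w $ k) + complex_of_real d *
      (a $ i * (\<Sum>k = 0..<N. b $ k * w $ k) + a' $ i * (\<Sum>k = 0..<N. b' $ k * w $ k)
       + cnj (a $ i) * (\<Sum>k = 0..<N. cnj (b $ k) * w $ k) + cnj (a' $ i) * (\<Sum>k = 0..<N. cnj (b' $ k) * w $ k))"
    by (simp add: sum.distrib sum_distrib_left distrib_left)
  also have "\<dots> = ?R $ i"
  proof -
    have "(cmat H *\<^sub>v w) $ i = (\<Sum>k = 0..<N. complex_of_real (H $$ (i,k)) * w $ k)"
    proof -
      have dH: "dim_row H = N" "dim_col H = N" using H by auto
      show ?thesis by (rule cmat_mult_vec_index[of i H w, unfolded dH]) (use i w in auto)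
    qed
    moreover have "b \<bullet> w = (\<Sum>k = 0..<N. b $ k * w $ k)" "b' \<bullet> w = (\<Sum>k = 0..<N. b' $ k * w $ k)"
      "map_vec cnj b \<bullet> w = (\<Sum>k = 0..<N. cnj (b $ k) * w $ k)"
      "map_vec cnj b' \<bullet> w = (\<Sum>k = 0..<N. cnj (b' $ k) * w $ k)"
      unfolding scalar_prod_def using w b b' by (auto intro!: sum.cong)
    moreover have "?R $ i = (cmat H *\<^sub>v w) $ i + complex_of_real d * ((b \<bullet> w) * a $ i + (b' \<bullet> w) * a' $ i
       + (map_vec cnj b \<bullet> w) * cnj (a $ i) + (map_vec cnj b' \<bullet> w) * cnj (a' $ i))"
      using H i a a' w by simp
    ultimately show ?thesis by (simp add: ac_simps)
  qed
  finally show "(cmat ?K *\<^sub>v w) $ i = ?R $ i" .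
qed


lemma hamiltonian_dims[simp]:
  "dim_row (hamiltonian A D Q) = dim_row A + dim_col A"
  "dim_col (hamiltonian A D Q) = dim_col A + dim_row A"
  unfolding hamiltonian_def by simp_all

lemma ham_struct:
  fixes K :: "real mat"
  assumes K: "K \<in> carrier_mat (n+n) (n+n)"
    and s1: "\<And>i j. i < n \<Longrightarrow> j < n \<Longrightarrow> K $$ (i, n+j) = K $$ (j, n+i)"
    and s2: "\<And>i j. i < n \<Longrightarrow> j < n \<Longrightarrow> K $$ (n+i, j) = K $$ (n+j, i)"
    and s3: "\<And>i j. i < n \<Longrightarrow> j < n \<Longrightarrow> K $$ (n+i, n+j) = - K $$ (j, i)"
  shows "\<exists>At Qt Dt. At \<in> carrier_mat n n \<and> Qt \<in> carrier_mat n n \<and> Dt \<in> carrier_mat n n \<and>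
       transpose_mat Qt = Qt \<and> transpose_mat Dt = Dt \<and> K = hamiltonian At Dt Qt"
proof -
  define At where "At = mat n n (\<lambda>(i,j). K $$ (i,j))"
  define Dt where "Dt = mat n n (\<lambda>(i,j). - K $$ (i, n+j))"
  define Qt where "Qt = mat n n (\<lambda>(i,j). - K $$ (n+i, j))"
  have c: "At \<in> carrier_mat n n" "Qt \<in> carrier_mat n n" "Dt \<in> carrier_mat n n"
    unfolding At_def Dt_def Qt_def by auto
  have sQ: "transpose_mat Qt = Qt" unfolding Qt_def by (rule eq_matI, auto simp: s2)
  have sD: "transpose_mat Dt = Dt" unfolding Dt_def by (rule eq_matI, auto simp: s1)
  have "K = hamiltonian At Dt Qt"
  proof (rule eq_matI)
    have "hamiltonian At Dt Qt \<in> carrier_mat (n+n) (n+n)" using c by simp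
    thus "dim_row K = dim_row (hamiltonian At Dt Qt)" "dim_col K = dim_col (hamiltonian At Dt Qt)"
      using K by auto
    fix i j assume "i < dim_row (hamiltonian At Dt Qt)" "j < dim_col (hamiltonian At Dt Qt)"
    hence i: "i < n + n" and j: "j < n + n" using c by auto
    show "K $$ (i,j) = hamiltonian At Dt Qt $$ (i,j)"
    proof (cases "i < n")
      case True
      show ?thesis
      proof (cases "j < n")
        case True
        thus ?thesis using \<open>i < n\<close> unfolding hamiltonian_def At_def Dt_def Qt_def by simp
      next
        case False
        thus ?thesis using \<open>i < n\<close> j unfolding hamiltonian_def At_def Dt_def Qt_def by simp
      qed
    next
      case False
      then obtain i' where i': "i = n + i'" "i' < n" using i by (metis add_less_cancel_left le_add_diff_inverse not_less)
      show ?thesis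
      proof (cases "j < n")
        case True
        thus ?thesis using i' unfolding hamiltonian_def At_def Dt_def Qt_def by simp
      next
        case False
        then obtain j' where j': "j = n + j'" "j' < n" using j by (metis add_less_cancel_left le_add_diff_inverse not_less)
        show ?thesis using i' j' s3[of i' j'] unfolding hamiltonian_def At_def Dt_def Qt_def by simp
      qed
    qed
  qed
  thus ?thesis using c sQ sD by blast
qed

lemma pert_ham:
  fixes A Q D :: "real mat" and u v :: "complex vec"
  assumes A: "A \<in> carrier_mat n n" and Q: "Q \<in> carrier_mat n n" and D: "D \<in> carrier_mat n n"
    and Qs: "transpose_mat Q = Q" and Ds: "transpose_mat D = D"
    and u: "u \<in> carrier_vec (n+n)" and v: "v \<in> carrier_vec (n+n)"
  shows "\<exists>At Qt Dt. At \<in> carrier_mat n n \<and> Qt \<in> carrier_mat n n \<and> Dt \<in> carrier_mat n n \<and>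
       transpose_mat Qt = Qt \<and> transpose_mat Dt = Dt \<and>
       hamiltonian A D Q + (2 * d) \<cdot>\<^sub>m map_mat Re (outer_prod u (\<theta> \<cdot>\<^sub>v (Jmat n *\<^sub>v v)) + outer_prod v (\<theta> \<cdot>\<^sub>v (Jmat n *\<^sub>v u)))
         = hamiltonian At Dt Qt"
proof -
  let ?p = "\<theta> \<cdot>\<^sub>v (Jmat n *\<^sub>v v)" and ?q = "\<theta> \<cdot>\<^sub>v (Jmat n *\<^sub>v u)"
  let ?E = "outer_prod u ?p + outer_prod v ?q"
  let ?K = "hamiltonian A D Q + (2 * d) \<cdot>\<^sub>m map_mat Re ?E"
  have p: "?p \<in> carrier_vec (n+n)" and q: "?q \<in> carrier_vec (n+n)" using J_carrier[OF u] J_carrier[OF v] by auto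
  have E: "?E \<in> carrier_mat (n+n) (n+n)"
    using outer_prod_carrier[of v ?q] outer_prod_carrier[of u ?p] u v p q by (intro add_carrier_mat) simp
  have K: "?K \<in> carrier_mat (n+n) (n+n)"
    by (rule add_carrier_mat, rule smult_carrier_mat, simp add: map_carrier_mat E)
  have Eent: "?E $$ (i,k) = u $ i * ?p $ k + v $ i * ?q $ k" if "i < n+n" "k < n+n" for i k
    using that u v p q by simp
  have pk: "(Jmat n *\<^sub>v v) $ k = (if k < n then v $ (k + n) else - v $ (k - n))" if "k < n + n" for k
    using J_index[OF v that] .
  have qk: "(Jmat n *\<^sub>v u) $ k = (if k < n then u $ (k + n) else - u $ (k - n))" if "k < n + n" for k
    using J_index[OF u that] .
  have Kent: "?K $$ (i,k) = hamiltonian A D Q $$ (i,k) + 2 * d * Re (?E $$ (i,k))" if "i < n+n" "k < n+n" for i k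
  proof -
    have "hamiltonian A D Q \<in> carrier_mat (n+n) (n+n)" using A D Q by simp
    hence dH: "dim_row (hamiltonian A D Q) = n+n" "dim_col (hamiltonian A D Q) = n+n" by auto
    have dE: "dim_row ?E = n+n" "dim_col ?E = n+n" using E by auto
    show ?thesis using that dE dH by simp
  qed
  have Hent: "hamiltonian A D Q $$ (i,k) = (if i < n then if k < n then A $$ (i,k) else - D $$ (i, k - n)
      else if k < n then - Q $$ (i - n, k) else - A $$ (k - n, i - n))" if "i < n+n" "k < n+n" for i k
    using that A D Q unfolding hamiltonian_def by simp
  have Qe: "Q $$ (i,j) = Q $$ (j,i)" if "i < n" "j < n" for i j
    using arg_cong[OF Qs, of "\<lambda>M. M $$ (i,j)"] that Q by simp
  have De: "D $$ (i,j) = D $$ (j,i)" if "i < n" "j < n" for i j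
    using arg_cong[OF Ds, of "\<lambda>M. M $$ (i,j)"] that D by simp
  show ?thesis
  proof (rule ham_struct[OF K])
    fix i j assume i: "i < n" and j: "j < n"
    have k: "?K $$ (a, b) = hamiltonian A D Q $$ (a, b) + 2 * d * Re (?E $$ (a, b))"
      if "a < n + n" "b < n + n" for a b by (rule Kent[OF that])
    have ii: "i < n + n" and jj: "j < n + n" and ni: "n + i < n + n" and nj: "n + j < n + n" using i j by auto
    show "?K $$ (i, n+j) = ?K $$ (j, n+i)"
      unfolding k[OF ii nj] k[OF jj ni] using i j by (simp add: Eent pk qk Hent De algebra_simps del: index_mult_mat_vec)
    show "?K $$ (n+i, j) = ?K $$ (n+j, i)"
      unfolding k[OF ni jj] k[OF nj ii] using i j by (simp add: Eent pk qk Hent Qe algebra_simps del: index_mult_mat_vec)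
    show "?K $$ (n+i, n+j) = - ?K $$ (j, i)"
      unfolding k[OF ni nj] k[OF jj ii] using i j by (simp add: Eent pk qk Hent algebra_simps del: index_mult_mat_vec)
  qed
qed

lemma dot_comb:
  fixes b u0 u1 u2 u3 u4 :: "complex vec"
  assumes "b \<in> carrier_vec N" "u0 \<in> carrier_vec N" "u1 \<in> carrier_vec N" "u2 \<in> carrier_vec N"
    "u3 \<in> carrier_vec N" "u4 \<in> carrier_vec N"
  shows "b \<bullet> (u0 + complex_of_real d \<cdot>\<^sub>v (\<alpha> \<cdot>\<^sub>v u1 + \<beta> \<cdot>\<^sub>v u2 + \<gamma> \<cdot>\<^sub>v u3 + \<delta> \<cdot>\<^sub>v u4))
    = b \<bullet> u0 + complex_of_real d * (\<alpha> * (b \<bullet> u1) + \<beta> * (b \<bullet> u2) + \<gamma> * (b \<bullet> u3) + \<delta> * (b \<bullet> u4))"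
proof -
  have "b \<bullet> (u0 + complex_of_real d \<cdot>\<^sub>v (\<alpha> \<cdot>\<^sub>v u1 + \<beta> \<cdot>\<^sub>v u2 + \<gamma> \<cdot>\<^sub>v u3 + \<delta> \<cdot>\<^sub>v u4))
    = (\<Sum>k = 0..<N. b $ k * u0 $ k + complex_of_real d * (\<alpha> * (b $ k * u1 $ k) + \<beta> * (b $ k * u2 $ k)
        + \<gamma> * (b $ k * u3 $ k) + \<delta> * (b $ k * u4 $ k)))"
    unfolding scalar_prod_def using assms by (intro sum.cong) (auto simp: algebra_simps)
  also have "\<dots> = b \<bullet> u0 + complex_of_real d * (\<alpha> * (b \<bullet> u1) + \<beta> * (b \<bullet> u2) + \<gamma> * (b \<bullet> u3) + \<delta> * (b \<bullet> u4))"
    unfolding scalar_prod_def using assms by (simp add: sum.distrib sum_distrib_left distrib_left)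
  finally show ?thesis .
qed


lemma core:
  fixes A Q D P At Qt Dt :: "real mat" and a b a' b' :: "complex vec" and \<nu> :: complex and c d :: real
  assumes A: "A \<in> carrier_mat n n" and Q: "Q \<in> carrier_mat n n" and D: "D \<in> carrier_mat n n"
    and Qs: "transpose_mat Q = Q" and Ds: "transpose_mat D = D"
    and st: "stabilizing_solution n A Q D P"
    and a: "a \<in> carrier_vec (n+n)" and b: "b \<in> carrier_vec (n+n)"
    and a': "a' \<in> carrier_vec (n+n)" and b': "b' \<in> carrier_vec (n+n)"
    and a0: "a \<noteq> 0\<^sub>v (n+n)"
    and ea: "cmat (hamiltonian A D Q) *\<^sub>v a = \<nu> \<cdot>\<^sub>v a"
    and lb: "\<And>w. w \<in> carrier_vec (n+n) \<Longrightarrow> b \<bullet> (cmat (hamiltonian A D Q) *\<^sub>v w) = \<nu> * (b \<bullet> w)"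
    and lb': "\<And>w. w \<in> carrier_vec (n+n) \<Longrightarrow> b' \<bullet> (cmat (hamiltonian A D Q) *\<^sub>v w) = (- \<nu>) * (b' \<bullet> w)"
    and ba: "b \<bullet> a = complex_of_real c"
    and nuRe: "Re \<nu> < 0" and nuIm: "Im \<nu> \<noteq> 0"
    and cond: "Re \<nu> + c * d < 0"
    and At: "At \<in> carrier_mat n n" and Qt: "Qt \<in> carrier_mat n n" and Dt: "Dt \<in> carrier_mat n n"
    and Heq: "hamiltonian A D Q + (2 * d) \<cdot>\<^sub>m map_mat Re (outer_prod a b + outer_prod a' b') = hamiltonian At Dt Qt"
  shows "stabilizing_solution n At Qt Dt P"
proof -
  have sol: "are_solution n A Q D P" and h: "hurwitz (A - D * P)" using st unfolding stabilizing_solution_def by auto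
  have P: "P \<in> carrier_mat n n" using sol unfolding are_solution_def by auto
  have Hcar: "hamiltonian A D Q \<in> carrier_mat (n+n) (n+n)" using A D Q by simp
  let ?Hc = "cmat (hamiltonian A D Q)" and ?Ht = "cmat (hamiltonian At Dt Qt)"
  let ?cP = "cmat P" and ?M = "cmat (A - D * P)"
  define ca where "ca = map_vec cnj a"
  define cb where "cb = map_vec cnj b"
  define ca' where "ca' = map_vec cnj a'"
  define cb' where "cb' = map_vec cnj b'"
  have ca: "ca \<in> carrier_vec (n+n)" and cb: "cb \<in> carrier_vec (n+n)"
    and ca': "ca' \<in> carrier_vec (n+n)" and cb': "cb' \<in> carrier_vec (n+n)"
    unfolding ca_def cb_def ca'_def cb'_def using a b a' b' by auto
  have HtC: "?Ht *\<^sub>v w = ?Hc *\<^sub>v w + complex_of_real d \<cdot>\<^sub>v ((b \<bullet> w) \<cdot>\<^sub>v a + (b' \<bullet> w) \<cdot>\<^sub>v a'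
       + (cb \<bullet> w) \<cdot>\<^sub>v ca + (cb' \<bullet> w) \<cdot>\<^sub>v ca')" if w: "w \<in> carrier_vec (n+n)" for w
    using pert[OF Hcar a b a' b' w, of d] unfolding Heq ca_def cb_def ca'_def cb'_def .
  have nRe1: "0 < Re (- \<nu>)" using nuRe by simp
  have nRe2: "0 < Re (cnj (- \<nu>))" using nuRe by simp
  have nb'S: "b' \<bullet> (x @\<^sub>v (?cP *\<^sub>v x)) = 0" if x: "x \<in> carrier_vec n" for x
    by (rule left_annih[OF A Q D Qs Ds st b' lb' nRe1 x])
  have lcb': "cb' \<bullet> (?Hc *\<^sub>v w) = cnj (- \<nu>) * (cb' \<bullet> w)" if w: "w \<in> carrier_vec (n+n)" for w
    unfolding cb'_def by (rule left_eig_cnj[OF Hcar b' lb' w])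
  have ncb'S: "cb' \<bullet> (x @\<^sub>v (?cP *\<^sub>v x)) = 0" if x: "x \<in> carrier_vec n" for x
    by (rule left_annih[OF A Q D Qs Ds st cb' lcb' nRe2 x])
  have aS: "vec_last a n = ?cP *\<^sub>v vec_first a n"
    using eig_loc[OF A Q D Qs Ds st a a0 ea] nuRe by simp
  define a1 where "a1 = vec_first a n"
  have a1: "a1 \<in> carrier_vec n" unfolding a1_def by simp
  have a_eq: "a = a1 @\<^sub>v (?cP *\<^sub>v a1)" unfolding a1_def using aS a by (metis vec_first_last_append)
  define ca1 where "ca1 = map_vec cnj a1"
  have ca1: "ca1 \<in> carrier_vec n" unfolding ca1_def using a1 by simp
  have ca_eq: "ca = ca1 @\<^sub>v (?cP *\<^sub>v ca1)"
    unfolding ca_def ca1_def by (subst a_eq, unfold cnj_append_vec, subst cmat_mult_cnj, use a1 P in auto)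
  have eca: "?Hc *\<^sub>v ca = cnj \<nu> \<cdot>\<^sub>v ca" unfolding ca_def by (rule right_eig_cnj[OF Hcar a ea])
  have bca: "b \<bullet> ca = 0"
  proof -
    have "\<nu> * (b \<bullet> ca) = b \<bullet> (?Hc *\<^sub>v ca)" using lb[OF ca] by simp
    also have "\<dots> = cnj \<nu> * (b \<bullet> ca)" unfolding eca using b ca by simp
    finally have "(\<nu> - cnj \<nu>) * (b \<bullet> ca) = 0" by (simp add: algebra_simps)
    moreover have "\<nu> - cnj \<nu> \<noteq> 0" using nuIm by (simp add: complex_eq_iff)
    ultimately show ?thesis by simp
  qed
  have cba: "cb \<bullet> a = 0"
    using cnj_scalar[of b ca] b ca bca unfolding cb_def ca_def by simp
  have cbca: "cb \<bullet> ca = complex_of_real c"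
    using cnj_scalar[of b a] b a ba unfolding cb_def ca_def by simp
  have are_new: "are_solution n At Qt Dt P"
  proof (rule S_inv_are[OF At Qt Dt P])
    fix x :: "complex vec" assume x: "x \<in> carrier_vec n"
    define w where "w = x @\<^sub>v (?cP *\<^sub>v x)"
    have w: "w \<in> carrier_vec (n+n)" unfolding w_def using x P by simp
    define \<alpha> where "\<alpha> = b \<bullet> w"
    define \<beta> where "\<beta> = cb \<bullet> w"
    define y where "y = ?M *\<^sub>v x + complex_of_real d \<cdot>\<^sub>v (\<alpha> \<cdot>\<^sub>v a1 + \<beta> \<cdot>\<^sub>v ca1)"
    have M: "?M \<in> carrier_mat n n" using A D P by simp
    have y: "y \<in> carrier_vec n" unfolding y_def using M x a1 ca1 by simp
    have Py: "?cP *\<^sub>v y = ?cP *\<^sub>v (?M *\<^sub>v x) + complex_of_real d \<cdot>\<^sub>v (\<alpha> \<cdot>\<^sub>v (?cP *\<^sub>v a1) + \<beta> \<cdot>\<^sub>v (?cP *\<^sub>v ca1))"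
      unfolding y_def using P M x a1 ca1
      by (simp add: mult_add_distrib_mat_vec[of _ n n] mult_mat_vec[of _ n n])
    have "?Ht *\<^sub>v w = y @\<^sub>v (?cP *\<^sub>v y)"
    proof -
      have "?Ht *\<^sub>v w = ?Hc *\<^sub>v w + complex_of_real d \<cdot>\<^sub>v (\<alpha> \<cdot>\<^sub>v a + 0 \<cdot>\<^sub>v a' + \<beta> \<cdot>\<^sub>v ca + 0 \<cdot>\<^sub>v ca')"
      proof -
        have nb': "b' \<bullet> w = 0" and ncb': "cb' \<bullet> w = 0" unfolding w_def using nb'S[OF x] ncb'S[OF x] by auto
        show ?thesis using HtC[OF w] unfolding \<alpha>_def \<beta>_def nb' ncb' .
      qed
      also have "?Hc *\<^sub>v w = (?M *\<^sub>v x) @\<^sub>v (?cP *\<^sub>v (?M *\<^sub>v x))" unfolding w_def by (rule H_S[OF A Q D sol x])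
      finally have e: "?Ht *\<^sub>v w = ((?M *\<^sub>v x) @\<^sub>v (?cP *\<^sub>v (?M *\<^sub>v x))) + complex_of_real d \<cdot>\<^sub>v (\<alpha> \<cdot>\<^sub>v a + 0 \<cdot>\<^sub>v a' + \<beta> \<cdot>\<^sub>v ca + 0 \<cdot>\<^sub>v ca')" .
      show ?thesis
      proof (rule eq_vecI)
        show "dim_vec (?Ht *\<^sub>v w) = dim_vec (y @\<^sub>v (?cP *\<^sub>v y))" using At Dt Qt y P by simp
        fix k assume "k < dim_vec (y @\<^sub>v (?cP *\<^sub>v y))"
        hence k: "k < n + n" using y P by simp
        have dims: "dim_row D = n" "dim_col P = n" "dim_row P = n" "dim_vec y = n" "dim_vec (?M *\<^sub>v x) = n"
          "dim_vec (?cP *\<^sub>v (?M *\<^sub>v x)) = n" using D P y M by auto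
        show "(?Ht *\<^sub>v w) $ k = (y @\<^sub>v (?cP *\<^sub>v y)) $ k"
        proof (cases "k < n")
          case True
          thus ?thesis unfolding e Py using k a' ca' M x a1 ca1 P
            by (simp add: a_eq ca_eq y_def dims del: index_mult_mat_vec)
        next
          case False
          thus ?thesis unfolding e Py using k a' ca' M x a1 ca1 P
            by (simp add: a_eq ca_eq dims del: index_mult_mat_vec)
        qed
      qed
    qed
    thus "\<exists>y \<in> carrier_vec n. ?Ht *\<^sub>v (x @\<^sub>v (?cP *\<^sub>v x)) = y @\<^sub>v (?cP *\<^sub>v y)"
      using y unfolding w_def by blast
  qed
  have hurw: "hurwitz (At - Dt * P)"
    unfolding hurwitz_def
  proof (intro allI impI)
    fix l assume ev: "eigenvalue (cmat (At - Dt * P)) l"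
    let ?M' = "cmat (At - Dt * P)"
    have M': "?M' \<in> carrier_mat n n" using At Dt P by simp
    have M: "?M \<in> carrier_mat n n" using A D P by simp
    obtain y where y: "y \<in> carrier_vec n" and y0: "y \<noteq> 0\<^sub>v n" and ey: "?M' *\<^sub>v y = l \<cdot>\<^sub>v y"
      using ev M' unfolding eigenvalue_def eigenvector_def by auto
    define w where "w = y @\<^sub>v (?cP *\<^sub>v y)"
    have w: "w \<in> carrier_vec (n+n)" unfolding w_def using y P by simp
    have Py: "?cP *\<^sub>v y \<in> carrier_vec n" using y P by simp
    have Htw: "?Ht *\<^sub>v w = l \<cdot>\<^sub>v w"
    proof -
      have "?Ht *\<^sub>v w = (?M' *\<^sub>v y) @\<^sub>v (?cP *\<^sub>v (?M' *\<^sub>v y))"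
        unfolding w_def by (rule H_S[OF At Qt Dt are_new y])
      also have "\<dots> = (l \<cdot>\<^sub>v y) @\<^sub>v (l \<cdot>\<^sub>v (?cP *\<^sub>v y))"
        unfolding ey using mult_mat_vec[of ?cP n n y l] P y by simp
      also have "\<dots> = l \<cdot>\<^sub>v w" unfolding w_def smult_append_vec ..
      finally show ?thesis .
    qed
    have nb': "b' \<bullet> w = 0" and ncb': "cb' \<bullet> w = 0" unfolding w_def using nb'S[OF y] ncb'S[OF y] by auto
    have Hcw: "?Hc *\<^sub>v w \<in> carrier_vec (n+n)" using Hcar w by simp
    have bHt: "b \<bullet> (?Ht *\<^sub>v w) = \<nu> * (b \<bullet> w) + complex_of_real d * (complex_of_real c * (b \<bullet> w))"
    proof -
      have "b \<bullet> (?Ht *\<^sub>v w) = b \<bullet> (?Hc *\<^sub>v w) + complex_of_real d * ((b \<bullet> w) * (b \<bullet> a) + (b' \<bullet> w) * (b \<bullet> a')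
         + (cb \<bullet> w) * (b \<bullet> ca) + (cb' \<bullet> w) * (b \<bullet> ca'))"
        unfolding HtC[OF w] by (rule dot_comb[OF b Hcw a a' ca ca'])
      thus ?thesis unfolding lb[OF w] ba bca nb' ncb' by (simp add: algebra_simps)
    qed
    have lcb: "cb \<bullet> (?Hc *\<^sub>v w) = cnj \<nu> * (cb \<bullet> w)"
      unfolding cb_def by (rule left_eig_cnj[OF Hcar b lb w])
    have cbHt: "cb \<bullet> (?Ht *\<^sub>v w) = cnj \<nu> * (cb \<bullet> w) + complex_of_real d * (complex_of_real c * (cb \<bullet> w))"
    proof -
      have "cb \<bullet> (?Ht *\<^sub>v w) = cb \<bullet> (?Hc *\<^sub>v w) + complex_of_real d * ((b \<bullet> w) * (cb \<bullet> a) + (b' \<bullet> w) * (cb \<bullet> a')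
         + (cb \<bullet> w) * (cb \<bullet> ca) + (cb' \<bullet> w) * (cb \<bullet> ca'))"
        unfolding HtC[OF w] by (rule dot_comb[OF cb Hcw a a' ca ca'])
      thus ?thesis unfolding lcb cba cbca nb' ncb' by (simp add: algebra_simps)
    qed
    have e1: "l * (b \<bullet> w) = (\<nu> + complex_of_real (c * d)) * (b \<bullet> w)"
      using bHt Htw b w by (simp add: algebra_simps)
    have e2: "l * (cb \<bullet> w) = (cnj \<nu> + complex_of_real (c * d)) * (cb \<bullet> w)"
      using cbHt Htw cb w by (simp add: algebra_simps)
    show "Re l < 0"
    proof (cases "b \<bullet> w \<noteq> 0")
      case True
      hence "l = \<nu> + complex_of_real (c * d)" using e1 by simp
      thus ?thesis using cond by simp
    next
      case False
      hence bw0: "b \<bullet> w = 0" by simp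
      show ?thesis
      proof (cases "cb \<bullet> w \<noteq> 0")
        case True
        hence "l = cnj \<nu> + complex_of_real (c * d)" using e2 by simp
        thus ?thesis using cond by simp
      next
        case False
        hence cbw0: "cb \<bullet> w = 0" by simp
        have Hcw_eq: "?Hc *\<^sub>v w = l \<cdot>\<^sub>v w"
        proof (rule eq_vecI)
          fix k assume "k < dim_vec (l \<cdot>\<^sub>v w)"
          hence k: "k < n + n" using w by simp
          have "(?Ht *\<^sub>v w) $ k = (l \<cdot>\<^sub>v w) $ k" using Htw by simp
          thus "(?Hc *\<^sub>v w) $ k = (l \<cdot>\<^sub>v w) $ k"
            unfolding HtC[OF w] bw0 cbw0 nb' ncb' using k a a' ca ca' Hcar w by simp
        qed (use A w in simp)
        have "(?M *\<^sub>v y) @\<^sub>v (?cP *\<^sub>v (?M *\<^sub>v y)) = (l \<cdot>\<^sub>v y) @\<^sub>v (l \<cdot>\<^sub>v (?cP *\<^sub>v y))"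
          using Hcw_eq unfolding w_def H_S[OF A Q D sol y] smult_append_vec .
        moreover have c1: "?M *\<^sub>v y \<in> carrier_vec n" using M y by simp
        moreover have c2: "l \<cdot>\<^sub>v y \<in> carrier_vec n" using y by simp
        ultimately have My: "?M *\<^sub>v y = l \<cdot>\<^sub>v y" using append_vec_eq[OF c1 c2] by blast
        have "eigenvalue ?M l" unfolding eigenvalue_def eigenvector_def using My y y0 M D by auto
        thus ?thesis using h hurwitz_eig by blast
      qed
    qed
  qed
  show ?thesis unfolding stabilizing_solution_def using are_new hurw by simp
qed

theorem theorem2:
  fixes n :: nat and A Q D P :: "real mat" and \<mu> :: complex and vj vmj :: "complex vec"
  assumes A: "A \<in> carrier_mat n n" and Qc: "Q \<in> carrier_mat n n" and Dc: "D \<in> carrier_mat n n"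
    and Qsym: "transpose_mat Q = Q" and Dsym: "transpose_mat D = D"
    and stab: "stabilizable n A D" and det: "detectable n Q A"
    and P: "stabilizing_solution n A Q D P"
    and nonreal: "Im \<mu> \<noteq> 0"
    and pm1: "partial_multiplicity_one (cmat (hamiltonian A D Q)) \<mu>"
    and ev1: "eigenvector (cmat (hamiltonian A D Q)) vj \<mu>"
    and ev2: "eigenvector (cmat (hamiltonian A D Q)) vmj (- \<mu>)"
    and nz: "vj \<bullet> (Jmat n *\<^sub>v vmj) \<noteq> 0"
  shows "\<forall>\<Delta>\<mu> :: real.
    (let \<theta> = 1 / (vj \<bullet> (Jmat n *\<^sub>v vmj));
         p = \<theta> \<cdot>\<^sub>v (Jmat n *\<^sub>v vmj);
         q = \<theta> \<cdot>\<^sub>v (Jmat n *\<^sub>v vj)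
     in \<exists>At Qt Dt.
       At \<in> carrier_mat n n \<and> Qt \<in> carrier_mat n n \<and> Dt \<in> carrier_mat n n \<and>
       transpose_mat Qt = Qt \<and> transpose_mat Dt = Dt \<and>
       hamiltonian A D Q + (2 * \<Delta>\<mu>) \<cdot>\<^sub>m map_mat Re (outer_prod vj p + outer_prod vmj q)
         = hamiltonian At Dt Qt \<and>
       (\<Delta>\<mu> / Re \<mu> > -1 \<longrightarrow>
          stabilizing_solution n At Qt Dt P \<and>
          (\<forall>X. stabilizing_solution n At Qt Dt X \<longrightarrow> X = P)))"
proof (intro allI)
  fix d :: real
  let ?H = "hamiltonian A D Q" and ?Hc = "cmat (hamiltonian A D Q)"
  define \<theta> where "\<theta> = 1 / (vj \<bullet> (Jmat n *\<^sub>v vmj))"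
  define p where "p = \<theta> \<cdot>\<^sub>v (Jmat n *\<^sub>v vmj)"
  define q where "q = \<theta> \<cdot>\<^sub>v (Jmat n *\<^sub>v vj)"
  have Hcar: "?H \<in> carrier_mat (n+n) (n+n)" using A Dc Qc by simp
  have dH: "dim_row ?Hc = n + n" using A by simp
  have vj: "vj \<in> carrier_vec (n+n)" and vj0: "vj \<noteq> 0\<^sub>v (n+n)" and evj: "?Hc *\<^sub>v vj = \<mu> \<cdot>\<^sub>v vj"
    using ev1 dH unfolding eigenvector_def by auto
  have vmj: "vmj \<in> carrier_vec (n+n)" and vmj0: "vmj \<noteq> 0\<^sub>v (n+n)" and evmj: "?Hc *\<^sub>v vmj = (- \<mu>) \<cdot>\<^sub>v vmj"
    using ev2 dH unfolding eigenvector_def by auto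
  have p: "p \<in> carrier_vec (n+n)" and q: "q \<in> carrier_vec (n+n)"
    unfolding p_def q_def using J_carrier[OF vj] J_carrier[OF vmj] by auto
  obtain At Qt Dt where At: "At \<in> carrier_mat n n" and Qt: "Qt \<in> carrier_mat n n" and Dt: "Dt \<in> carrier_mat n n"
    and Qts: "transpose_mat Qt = Qt" and Dts: "transpose_mat Dt = Dt"
    and Heq: "?H + (2 * d) \<cdot>\<^sub>m map_mat Re (outer_prod vj p + outer_prod vmj q) = hamiltonian At Dt Qt"
    using pert_ham[OF A Qc Dc Qsym Dsym vj vmj, of d \<theta>] unfolding p_def q_def by blast
  have main: "stabilizing_solution n At Qt Dt P \<and> (\<forall>X. stabilizing_solution n At Qt Dt X \<longrightarrow> X = P)"
    if cnd: "d / Re \<mu> > -1"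
  proof -
    have Re0: "Re \<mu> \<noteq> 0" using eig_loc[OF A Qc Dc Qsym Dsym P vj vj0 evj] by simp
    have Jvj: "Jmat n *\<^sub>v vj \<in> carrier_vec (n+n)" and Jvmj: "Jmat n *\<^sub>v vmj \<in> carrier_vec (n+n)"
      using J_carrier[OF vj] J_carrier[OF vmj] by auto
    have Hvj: "?Hc *\<^sub>v vj \<in> carrier_vec (n+n)" and Hvmj: "?Hc *\<^sub>v vmj \<in> carrier_vec (n+n)"
      using Hcar vj vmj by auto
    have lp: "p \<bullet> (?Hc *\<^sub>v w) = \<mu> * (p \<bullet> w)" if w: "w \<in> carrier_vec (n+n)" for w
    proof -
      have Hw: "?Hc *\<^sub>v w \<in> carrier_vec (n+n)" using Hcar w by simp
      have "p \<bullet> (?Hc *\<^sub>v w) = \<theta> * ((Jmat n *\<^sub>v vmj) \<bullet> (?Hc *\<^sub>v w))"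
        unfolding p_def using Jvmj Hw by simp
      also have "(Jmat n *\<^sub>v vmj) \<bullet> (?Hc *\<^sub>v w) = - ((Jmat n *\<^sub>v (?Hc *\<^sub>v vmj)) \<bullet> w)"
        by (rule ham_identity[OF A Qc Dc Qsym Dsym vmj w])
      also have "Jmat n *\<^sub>v (?Hc *\<^sub>v vmj) = (- \<mu>) \<cdot>\<^sub>v (Jmat n *\<^sub>v vmj)"
        unfolding evmj by (rule J_smult[OF vmj])
      finally show ?thesis unfolding p_def using Jvmj w by simp
    qed
    have lq: "q \<bullet> (?Hc *\<^sub>v w) = (- \<mu>) * (q \<bullet> w)" if w: "w \<in> carrier_vec (n+n)" for w
    proof -
      have Hw: "?Hc *\<^sub>v w \<in> carrier_vec (n+n)" using Hcar w by simp
      have "q \<bullet> (?Hc *\<^sub>v w) = \<theta> * ((Jmat n *\<^sub>v vj) \<bullet> (?Hc *\<^sub>v w))"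
        unfolding q_def using Jvj Hw by simp
      also have "(Jmat n *\<^sub>v vj) \<bullet> (?Hc *\<^sub>v w) = - ((Jmat n *\<^sub>v (?Hc *\<^sub>v vj)) \<bullet> w)"
        by (rule ham_identity[OF A Qc Dc Qsym Dsym vj w])
      also have "Jmat n *\<^sub>v (?Hc *\<^sub>v vj) = \<mu> \<cdot>\<^sub>v (Jmat n *\<^sub>v vj)"
        unfolding evj by (rule J_smult[OF vj])
      finally show ?thesis unfolding q_def using Jvj w by simp
    qed
    have pvj: "p \<bullet> vj = complex_of_real 1"
    proof -
      have "p \<bullet> vj = \<theta> * ((Jmat n *\<^sub>v vmj) \<bullet> vj)" unfolding p_def using Jvmj vj by simp
      also have "(Jmat n *\<^sub>v vmj) \<bullet> vj = vj \<bullet> (Jmat n *\<^sub>v vmj)" by (rule comm_scalar_prod[OF Jvmj vj])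
      finally show ?thesis unfolding \<theta>_def using nz by simp
    qed
    have qvmj: "q \<bullet> vmj = complex_of_real (- 1)"
    proof -
      have "q \<bullet> vmj = \<theta> * ((Jmat n *\<^sub>v vj) \<bullet> vmj)" unfolding q_def using Jvj vmj by simp
      also have "(Jmat n *\<^sub>v vj) \<bullet> vmj = - (vj \<bullet> (Jmat n *\<^sub>v vmj))" by (rule J_antisym[OF vj vmj])
      finally show ?thesis unfolding \<theta>_def using nz by simp
    qed
    have stab_new: "stabilizing_solution n At Qt Dt P"
    proof (cases "Re \<mu> < 0")
      case True
      have cond: "Re \<mu> + 1 * d < 0"
      proof -
        have "d / Re \<mu> * Re \<mu> < (-1) * Re \<mu>" using cnd True by (intro mult_strict_right_mono_neg) auto
        thus ?thesis using True by simp
      qed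
      show ?thesis
        by (rule core[OF A Qc Dc Qsym Dsym P vj p vmj q vj0 evj lp lq pvj True nonreal cond At Qt Dt Heq])
    next
      case False
      hence pos: "Re \<mu> > 0" using Re0 by simp
      have cond: "Re (- \<mu>) + (- 1) * d < 0"
      proof -
        have "d / Re \<mu> * Re \<mu> > (-1) * Re \<mu>" using cnd pos by (intro mult_strict_right_mono) auto
        thus ?thesis using pos by simp
      qed
      have lp': "p \<bullet> (?Hc *\<^sub>v w) = (- (- \<mu>)) * (p \<bullet> w)" if w: "w \<in> carrier_vec (n+n)" for w
        using lp[OF w] by simp
      have Heq': "?H + (2 * d) \<cdot>\<^sub>m map_mat Re (outer_prod vmj q + outer_prod vj p) = hamiltonian At Dt Qt"
      proof -
        have "outer_prod vmj q + outer_prod vj p = outer_prod vj p + outer_prod vmj q"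
          by (rule comm_add_mat[of _ "n+n" "n+n"], insert outer_prod_carrier[of vmj q] outer_prod_carrier[of vj p] vj vmj p q, auto)
        thus ?thesis using Heq by simp
      qed
      have nI: "Im (- \<mu>) \<noteq> 0" using nonreal by simp
      have nR: "Re (- \<mu>) < 0" using pos by simp
      show ?thesis
        by (rule core[OF A Qc Dc Qsym Dsym P vmj q vj p vmj0 evmj lq lp' qvmj nR nI cond At Qt Dt Heq'])
    qed
    moreover have "\<forall>X. stabilizing_solution n At Qt Dt X \<longrightarrow> X = P"
      using stabilizing_unique[OF At Qt Dt Qts Dts] stab_new by blast
    ultimately show ?thesis by blast
  qed
  show "let \<theta> = 1 / (vj \<bullet> (Jmat n *\<^sub>v vmj));
         p = \<theta> \<cdot>\<^sub>v (Jmat n *\<^sub>v vmj);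
         q = \<theta> \<cdot>\<^sub>v (Jmat n *\<^sub>v vj)
     in \<exists>At Qt Dt.
       At \<in> carrier_mat n n \<and> Qt \<in> carrier_mat n n \<and> Dt \<in> carrier_mat n n \<and>
       transpose_mat Qt = Qt \<and> transpose_mat Dt = Dt \<and>
       hamiltonian A D Q + (2 * d) \<cdot>\<^sub>m map_mat Re (outer_prod vj p + outer_prod vmj q)
         = hamiltonian At Dt Qt \<and>
       (d / Re \<mu> > -1 \<longrightarrow>
          stabilizing_solution n At Qt Dt P \<and>
          (\<forall>X. stabilizing_solution n At Qt Dt X \<longrightarrow> X = P))"
    unfolding Let_def \<theta>_def[symmetric] p_def[symmetric] q_def[symmetric]
    using At Qt Dt Qts Dts Heq main by blast
qed

end
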